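(* For $i=1,\dots,m$ let $n_i\in\mathbb N$ and let $f_i:\mathbb{R}^{n_i}\to(-\infty,+\infty]$ be lower semicontinuous and variationally convex at $\bar x_i$ for $\bar v_i\in\partial f_i(\bar x_i)$. Then the separable sum $f:=f_1\oplus\cdots\oplus f_m$, $f(x_1,\dots,x_m)=\sum_{i=1}^mf_i(x_i)$, is variationally convex at $\bar x:=(\bar x_1,\dots,\bar x_m)$ for $\bar v:=(\bar v_1,\dots,\bar v_m)\in\partial f(\bar x)$.
   Context: $\partial$ is the limiting (Mordukhovich) subdifferential. A lsc $h$ is variationally convex at $\bar x$ for $\bar v\in\partial h(\bar x)$ if for some convex neighborhood $U\times V$ of $(\bar x,\bar v)$ there are a lsc convex function $\varphi\le h$ on $U$ and $\varepsilon>0$ such that $[U_\varepsilon\times V]\cap\operatorname{gph}\partial h=[U\times V]\cap\operatorname{gph}\partial\varphi$ and $h(x)=\varphi(x)$ at the common elements $(x,v)$, where $U_\varepsilon=\{x\in U:h(x)<h(\bar x)+\varepsilon\}$. *)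

theory Defs
  imports Complex_Main "HOL-Library.Extended_Real"
begin

text \<open>Euclidean space R^n is modelled concretely as the functions nat => real
  that vanish at all coordinates j >= n (coordinates 0..n-1).  This allows the
  dimensions n_1,...,n_m of the blocks to vary with the block index.\<close>

definition Rn :: "nat \<Rightarrow> (nat \<Rightarrow> real) set" where
  "Rn n = {x. \<forall>j\<ge>n. x j = 0}"

definition ip :: "nat \<Rightarrow> (nat \<Rightarrow> real) \<Rightarrow> (nat \<Rightarrow> real) \<Rightarrow> real" where
  "ip n x y = (\<Sum>j<n. x j * y j)"

definition vdist :: "nat \<Rightarrow> (nat \<Rightarrow> real) \<Rightarrow> (nat \<Rightarrow> real) \<Rightarrow> real" where
  "vdist n x y = sqrt (\<Sum>j<n. (x j - y j)^2)"

definition vdiff :: "(nat \<Rightarrow> real) \<Rightarrow> (nat \<Rightarrow> real) \<Rightarrow> (nat \<Rightarrow> real)" where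
  "vdiff x y = (\<lambda>j. x j - y j)"

definition vcomb :: "real \<Rightarrow> (nat \<Rightarrow> real) \<Rightarrow> (nat \<Rightarrow> real) \<Rightarrow> (nat \<Rightarrow> real)" where
  "vcomb t x y = (\<lambda>j. t * x j + (1 - t) * y j)"

definition lsc_n :: "nat \<Rightarrow> ((nat \<Rightarrow> real) \<Rightarrow> ereal) \<Rightarrow> bool" where
  "lsc_n n h \<longleftrightarrow> (\<forall>x\<in>Rn n. \<forall>c. c < h x \<longrightarrow>
      (\<exists>\<delta>>0. \<forall>y\<in>Rn n. vdist n y x < \<delta> \<longrightarrow> c < h y))"

definition no_minf :: "nat \<Rightarrow> ((nat \<Rightarrow> real) \<Rightarrow> ereal) \<Rightarrow> bool" where
  "no_minf n h \<longleftrightarrow> (\<forall>x\<in>Rn n. h x \<noteq> -\<infinity>)"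

definition convex_set_n :: "nat \<Rightarrow> (nat \<Rightarrow> real) set \<Rightarrow> bool" where
  "convex_set_n n U \<longleftrightarrow> U \<subseteq> Rn n \<and>
     (\<forall>x\<in>U. \<forall>y\<in>U. \<forall>t\<in>{0..1}. vcomb t x y \<in> U)"

definition nhd_n :: "nat \<Rightarrow> (nat \<Rightarrow> real) set \<Rightarrow> (nat \<Rightarrow> real) \<Rightarrow> bool" where
  "nhd_n n U x \<longleftrightarrow> U \<subseteq> Rn n \<and> x \<in> Rn n \<and>
     (\<exists>r>0. {y\<in>Rn n. vdist n y x < r} \<subseteq> U)"

definition convex_fn_n :: "nat \<Rightarrow> ((nat \<Rightarrow> real) \<Rightarrow> ereal) \<Rightarrow> bool" where
  "convex_fn_n n h \<longleftrightarrow> (\<forall>x\<in>Rn n. \<forall>y\<in>Rn n. \<forall>t\<in>{0<..<1}.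
      h (vcomb t x y) \<le> ereal t * h x + ereal (1 - t) * h y)"

definition rsd :: "nat \<Rightarrow> ((nat \<Rightarrow> real) \<Rightarrow> ereal) \<Rightarrow> (nat \<Rightarrow> real) \<Rightarrow> (nat \<Rightarrow> real) set" where
  "rsd n h x = {v. x \<in> Rn n \<and> v \<in> Rn n \<and> \<bar>h x\<bar> \<noteq> \<infinity> \<and>
     (\<forall>\<epsilon>>0. \<exists>\<delta>>0. \<forall>y\<in>Rn n. vdist n y x < \<delta> \<longrightarrow>
        h y \<ge> h x + ereal (ip n v (vdiff y x) - \<epsilon> * vdist n y x))}"

definition lsd :: "nat \<Rightarrow> ((nat \<Rightarrow> real) \<Rightarrow> ereal) \<Rightarrow> (nat \<Rightarrow> real) \<Rightarrow> (nat \<Rightarrow> real) set" where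
  "lsd n h x = {v. x \<in> Rn n \<and> v \<in> Rn n \<and> \<bar>h x\<bar> \<noteq> \<infinity> \<and>
     (\<exists>xs vs. (\<forall>k. vs k \<in> rsd n h (xs k)) \<and>
        (\<lambda>k. vdist n (xs k) x) \<longlonglongrightarrow> 0 \<and>
        (\<lambda>k. h (xs k)) \<longlonglongrightarrow> h x \<and>
        (\<lambda>k. vdist n (vs k) v) \<longlonglongrightarrow> 0)}"

definition var_convex :: "nat \<Rightarrow> ((nat \<Rightarrow> real) \<Rightarrow> ereal) \<Rightarrow> (nat \<Rightarrow> real) \<Rightarrow> (nat \<Rightarrow> real) \<Rightarrow> bool" where
  "var_convex n h xb vb \<longleftrightarrow> vb \<in> lsd n h xb \<and>
     (\<exists>U V \<phi> \<epsilon>. convex_set_n n U \<and> convex_set_n n V \<and> nhd_n n U xb \<and> nhd_n n V vb \<and>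
        lsc_n n \<phi> \<and> no_minf n \<phi> \<and> convex_fn_n n \<phi> \<and> (\<forall>x\<in>U. \<phi> x \<le> h x) \<and> \<epsilon> > 0 \<and>
        {(x, v). x \<in> U \<and> h x < h xb + ereal \<epsilon> \<and> v \<in> V \<and> v \<in> lsd n h x}
          = {(x, v). x \<in> U \<and> v \<in> V \<and> v \<in> lsd n \<phi> x} \<and>
        (\<forall>x v. x \<in> U \<and> v \<in> V \<and> v \<in> lsd n \<phi> x \<longrightarrow> h x = \<phi> x))"

definition offs :: "(nat \<Rightarrow> nat) \<Rightarrow> nat \<Rightarrow> nat" where
  "offs n i = (\<Sum>k<i. n k)"

definition blk :: "(nat \<Rightarrow> nat) \<Rightarrow> (nat \<Rightarrow> real) \<Rightarrow> nat \<Rightarrow> (nat \<Rightarrow> real)" where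
  "blk n x i = (\<lambda>j. if j < n i then x (offs n i + j) else 0)"

definition concat_blocks :: "(nat \<Rightarrow> nat) \<Rightarrow> nat \<Rightarrow> (nat \<Rightarrow> nat \<Rightarrow> real) \<Rightarrow> (nat \<Rightarrow> real)" where
  "concat_blocks n m xs = (\<lambda>j. \<Sum>i<m. if offs n i \<le> j \<and> j < offs n i + n i
                                        then xs i (j - offs n i) else 0)"

definition sep_sum :: "(nat \<Rightarrow> nat) \<Rightarrow> nat \<Rightarrow> (nat \<Rightarrow> (nat \<Rightarrow> real) \<Rightarrow> ereal) \<Rightarrow> (nat \<Rightarrow> real) \<Rightarrow> ereal" where
  "sep_sum n m f x = (\<Sum>i<m. f i (blk n x i))"

end

theory Submission
  imports Defs "HOL-Analysis.L2_Norm"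
begin

lemma vdist_L2: "vdist n x y = L2_set (vdiff x y) {..<n}"
  by (simp add: vdist_def L2_set_def vdiff_def)

lemma vdist_nonneg[simp]: "0 \<le> vdist n x y"
  by (simp add: vdist_L2)

lemma vdist_sym: "vdist n x y = vdist n y x"
  unfolding vdist_def by (simp add: power2_commute)

lemma vdist_self[simp]: "vdist n x x = 0"
  unfolding vdist_def by simp

lemma vdist_triangle: "vdist n x z \<le> vdist n x y + vdist n y z"
proof -
  have eq: "vdiff x z = (\<lambda>i. vdiff x y i + vdiff y z i)" by (auto simp: vdiff_def)
  show ?thesis unfolding vdist_L2 eq by (rule L2_set_triangle_ineq)
qed

lemma coord_le_vdist: "j < n \<Longrightarrow> \<bar>x j - y j\<bar> \<le> vdist n x y"
proof -
  assume "j < n"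
  have "\<bar>x j - y j\<bar> = \<bar>vdiff x y j\<bar>" by (simp add: vdiff_def)
  also have "\<dots> \<le> L2_set (\<lambda>i. \<bar>vdiff x y i\<bar>) {..<n}"
    using \<open>j < n\<close> by (intro member_le_L2_set) auto
  also have "\<dots> = vdist n x y" unfolding vdist_L2 L2_set_def by simp
  finally show ?thesis .
qed

lemma ip_bound: "\<bar>ip n v w\<bar> \<le> L2_set v {..<n} * L2_set w {..<n}"
proof -
  have "\<bar>ip n v w\<bar> \<le> (\<Sum>j<n. \<bar>v j\<bar> * \<bar>w j\<bar>)"
    unfolding ip_def abs_mult[symmetric] by (rule sum_abs)
  also have "\<dots> \<le> L2_set v {..<n} * L2_set w {..<n}" by (rule L2_set_mult_ineq)
  finally show ?thesis .
qed

lemma norm_le_vdist: "L2_set v {..<n} \<le> L2_set vb {..<n} + vdist n v vb"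
proof -
  have eq: "v = (\<lambda>i. vdiff v vb i + vb i)" by (auto simp: vdiff_def)
  have "L2_set v {..<n} \<le> L2_set (vdiff v vb) {..<n} + L2_set vb {..<n}"
    by (subst eq) (rule L2_set_triangle_ineq)
  then show ?thesis by (simp add: vdist_L2)
qed

lemma Rn_eqI: "x \<in> Rn n \<Longrightarrow> y \<in> Rn n \<Longrightarrow> vdist n x y = 0 \<Longrightarrow> x = y"
proof
  fix j assume x: "x \<in> Rn n" and y: "y \<in> Rn n" and d: "vdist n x y = 0"
  show "x j = y j"
  proof (cases "j < n")
    case True
    with coord_le_vdist[OF True, of x y] d show ?thesis by simp
  next
    case False
    with x y show ?thesis by (simp add: Rn_def)
  qed
qed

lemma vcomb_Rn: "x \<in> Rn n \<Longrightarrow> y \<in> Rn n \<Longrightarrow> vcomb t x y \<in> Rn n"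
  by (simp add: Rn_def vcomb_def)

lemma vdist_vcomb: "0 \<le> t \<Longrightarrow> t \<le> 1 \<Longrightarrow> vdist n (vcomb t x y) c \<le> t * vdist n x c + (1 - t) * vdist n y c"
proof -
  assume t: "0 \<le> t" "t \<le> 1"
  have "vdiff (vcomb t x y) c = (\<lambda>i. t * vdiff x c i + (1 - t) * vdiff y c i)"
    by (auto simp: vdiff_def vcomb_def algebra_simps)
  then have "vdist n (vcomb t x y) c \<le> L2_set (\<lambda>i. t * vdiff x c i) {..<n} + L2_set (\<lambda>i. (1 - t) * vdiff y c i) {..<n}"
    unfolding vdist_L2 by (simp only: L2_set_triangle_ineq)
  also have "\<dots> = t * vdist n x c + (1 - t) * vdist n y c"
    using t by (simp add: vdist_L2 L2_set_right_distrib)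
  finally show ?thesis .
qed

lemma ball_convex: "convex_set_n n {y\<in>Rn n. vdist n y c < r}"
  unfolding convex_set_n_def
proof (intro conjI ballI)
  fix x y t assume x: "x \<in> {y\<in>Rn n. vdist n y c < r}" and y: "y \<in> {y\<in>Rn n. vdist n y c < r}" and t: "t \<in> {0..1::real}"
  have "vdist n (vcomb t x y) c \<le> t * vdist n x c + (1 - t) * vdist n y c"
    using t by (intro vdist_vcomb) auto
  also have "\<dots> < t * r + (1 - t) * r"
  proof (cases "t = 0")
    case True then show ?thesis using y by simp
  next
    case False
    then have "t * vdist n x c < t * r" using t x by auto
    moreover have "(1 - t) * vdist n y c \<le> (1 - t) * r" using t y by (intro mult_left_mono) auto
    ultimately show ?thesis by linarith
  qed
  finally show "vcomb t x y \<in> {y\<in>Rn n. vdist n y c < r}" using x y by (auto intro: vcomb_Rn simp: algebra_simps)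
qed auto

lemma convex_inter: "convex_set_n n A \<Longrightarrow> convex_set_n n B \<Longrightarrow> convex_set_n n (A \<inter> B)"
  unfolding convex_set_n_def by auto


lemma offs_Suc: "offs n (Suc i) = offs n i + n i"
  by (simp add: offs_def)

lemma sum_split_add: "(\<Sum>j<(a::nat)+b. g j) = (\<Sum>j<a. g j) + (\<Sum>j<b. g (a+j))"
  by (induction b) (auto simp: add.assoc)

lemma sum_blocks: "(\<Sum>j<offs n m. g j) = (\<Sum>i<m. \<Sum>j<n i. g (offs n i + j))"
  by (induction m) (auto simp: offs_Suc sum_split_add offs_def[of n 0])

lemma offs_le: "i < k \<Longrightarrow> offs n i + n i \<le> offs n k"
proof -
  assume "i < k"
  then have "{..<Suc i} \<subseteq> {..<k}" by auto
  then have "offs n (Suc i) \<le> offs n k" unfolding offs_def by (intro sum_mono2) auto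
  then show ?thesis by (simp add: offs_Suc)
qed

lemma blk_Rn[simp]: "blk n x i \<in> Rn (n i)"
  by (simp add: blk_def Rn_def)

lemma concat_blk:
  assumes "i < m" "xs i \<in> Rn (n i)"
  shows "blk n (concat_blocks n m xs) i = xs i"
proof
  fix j
  show "blk n (concat_blocks n m xs) i j = xs i j"
  proof (cases "j < n i")
    case True
    let ?g = "\<lambda>i'. if offs n i' \<le> offs n i + j \<and> offs n i + j < offs n i' + n i'
                     then xs i' (offs n i + j - offs n i') else 0"
    have z: "?g i' = 0" if "i' \<in> {..<m} - {i}" for i'
    proof -
      have "i' < i \<or> i < i'" using that by auto
      then show ?thesis
      proof
        assume "i' < i" then have "offs n i' + n i' \<le> offs n i" by (rule offs_le)
        then show ?thesis by auto
      next
        assume "i < i'" then have "offs n i + n i \<le> offs n i'" by (rule offs_le)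
        then show ?thesis using True by auto
      qed
    qed
    have "sum ?g {..<m} = ?g i + sum ?g ({..<m} - {i})"
      using assms(1) by (intro sum.remove) auto
    also have "sum ?g ({..<m} - {i}) = 0" using z by (intro sum.neutral) blast
    finally have "sum ?g {..<m} = xs i j" using True by simp
    then show ?thesis using True by (simp add: blk_def concat_blocks_def)
  next
    case False
    then show ?thesis using assms(2) by (simp add: blk_def Rn_def)
  qed
qed

lemma concat_Rn[simp]: "concat_blocks n m xs \<in> Rn (offs n m)"
  unfolding Rn_def
proof (intro CollectI allI impI)
  fix j assume j: "offs n m \<le> j"
  have "(if offs n i \<le> j \<and> j < offs n i + n i then xs i (j - offs n i) else 0) = 0" if "i \<in> {..<m}" for i
    using offs_le[of i m n] that j by auto
  then show "concat_blocks n m xs j = 0" unfolding concat_blocks_def by (intro sum.neutral) blast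
qed

lemma vdist_blk_sq: "(vdist (n i) (blk n x i) (blk n y i))^2 = (\<Sum>j<n i. (x (offs n i + j) - y (offs n i + j))^2)"
  unfolding vdist_def by (simp add: blk_def sum_nonneg)

lemma vdist_blocks: "vdist (offs n m) x y = L2_set (\<lambda>i. vdist (n i) (blk n x i) (blk n y i)) {..<m}"
  unfolding L2_set_def vdist_blk_sq by (simp add: vdist_def sum_blocks)

lemma ip_blocks: "ip (offs n m) v w = (\<Sum>i<m. ip (n i) (blk n v i) (blk n w i))"
  unfolding ip_def by (simp add: sum_blocks blk_def)

lemma blk_vdiff: "blk n (vdiff x y) i = vdiff (blk n x i) (blk n y i)"
  by (auto simp: blk_def vdiff_def)

lemma blk_vcomb: "blk n (vcomb t x y) i = vcomb t (blk n x i) (blk n y i)"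
  by (auto simp: blk_def vcomb_def)

lemma vdist_blk_le: "i < m \<Longrightarrow> vdist (n i) (blk n x i) (blk n y i) \<le> vdist (offs n m) x y"
  unfolding vdist_blocks by (rule member_le_L2_set) auto

lemma blk_eq_Rn:
  assumes "x \<in> Rn (offs n m)" "y \<in> Rn (offs n m)" "\<And>i. i < m \<Longrightarrow> blk n x i = blk n y i"
  shows "x = y"
proof (rule Rn_eqI[OF assms(1,2)])
  show "vdist (offs n m) x y = 0" unfolding vdist_blocks using assms(3)
    by (intro L2_set_0') auto
qed

lemma rep_blk:
  assumes "k < m" "i < m" "y \<in> Rn (n i)"
  shows "blk n (concat_blocks n m (\<lambda>k. if k = i then y else blk n x k)) k = (if k = i then y else blk n x k)"
  using assms by (intro concat_blk) auto


lemma ereal_sum_fin: "(\<And>i. i \<in> A \<Longrightarrow> \<bar>g i\<bar> \<noteq> \<infinity>) \<Longrightarrow> sum g A = ereal (\<Sum>i\<in>A. real_of_ereal (g i))"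
proof -
  assume h: "\<And>i. i \<in> A \<Longrightarrow> \<bar>g i\<bar> \<noteq> \<infinity>"
  have "sum g A = (\<Sum>i\<in>A. ereal (real_of_ereal (g i)))"
    using h by (intro sum.cong) (auto simp: ereal_real')
  then show ?thesis by simp
qed

lemma sum_noninf: "(\<And>i. i \<in> A \<Longrightarrow> g i \<noteq> -\<infinity>) \<Longrightarrow> sum g A \<noteq> (-\<infinity>::ereal)"
proof (induction A rule: infinite_finite_induct)
  case (insert a A)
  then have "g a \<noteq> -\<infinity>" "sum g A \<noteq> -\<infinity>" by auto
  then show ?case using insert by (cases "g a"; cases "sum g A") auto
qed auto

lemma sum_fin_iff:
  assumes "finite A" "\<And>i. i \<in> A \<Longrightarrow> g i \<noteq> -\<infinity>"
  shows "\<bar>sum g A\<bar> \<noteq> (\<infinity>::ereal) \<longleftrightarrow> (\<forall>i\<in>A. \<bar>g i\<bar> \<noteq> \<infinity>)"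
  using sum_Pinfty[of g A] sum_noninf[of A g] assms by (auto simp: abs_ereal_ge0 ereal_infty_less_eq2)

lemma pos_min: "(\<And>i. i < (m::nat) \<Longrightarrow> (0::real) < r i) \<Longrightarrow> \<exists>d>0. \<forall>i<m. d \<le> r i"
proof -
  assume h: "\<And>i. i < m \<Longrightarrow> (0::real) < r i"
  let ?d = "Min (insert 1 (r ` {..<m}))"
  have fin: "finite (insert 1 (r ` {..<m}))" by simp
  have "?d \<in> insert 1 (r ` {..<m})" using fin by (intro Min_in) auto
  then have "?d > 0" using h by auto
  moreover have "\<forall>i<m. ?d \<le> r i" using fin by (auto intro: Min_le)
  ultimately show ?thesis by blast
qed

lemma L2_set_delta: "i \<in> A \<Longrightarrow> finite A \<Longrightarrow> L2_set (\<lambda>k. if k = i then a else 0) A = \<bar>a\<bar>"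
proof -
  assume "i \<in> A" "finite A"
  have "L2_set (\<lambda>k. if k = i then a else 0) A = sqrt (\<Sum>k\<in>A. if k = i then a^2 else 0)"
    unfolding L2_set_def by (intro arg_cong[where f=sqrt] sum.cong) auto
  also have "\<dots> = \<bar>a\<bar>" using \<open>i \<in> A\<close> \<open>finite A\<close> by simp
  finally show ?thesis .
qed

lemma ereal_cancel:
  fixes a b S :: ereal
  shows "b + S + ereal r \<le> a + S \<Longrightarrow> \<bar>S\<bar> \<noteq> \<infinity> \<Longrightarrow> \<bar>b\<bar> \<noteq> \<infinity> \<Longrightarrow> a \<noteq> -\<infinity> \<Longrightarrow> b + ereal r \<le> a"
  by (cases a; cases S; cases b) auto

lemma rsd_sep:
  assumes nm: "\<And>i. i < m \<Longrightarrow> no_minf (n i) (f i)"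
    and x: "x \<in> Rn (offs n m)" and v: "v \<in> Rn (offs n m)"
  shows "v \<in> rsd (offs n m) (sep_sum n m f) x \<longleftrightarrow> (\<forall>i<m. blk n v i \<in> rsd (n i) (f i) (blk n x i))"
proof -
  have nmi: "f i (blk n y i) \<noteq> -\<infinity>" if "i < m" for i y
    using nm[OF that] by (simp add: no_minf_def)
  have finiff: "\<bar>sep_sum n m f y\<bar> \<noteq> \<infinity> \<longleftrightarrow> (\<forall>i<m. \<bar>f i (blk n y i)\<bar> \<noteq> \<infinity>)" for y
  proof -
    have "\<bar>(\<Sum>i<m. f i (blk n y i))\<bar> \<noteq> \<infinity> \<longleftrightarrow> (\<forall>i\<in>{..<m}. \<bar>f i (blk n y i)\<bar> \<noteq> \<infinity>)"
      by (rule sum_fin_iff) (auto simp: nmi)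
    then show ?thesis unfolding sep_sum_def by (simp add: Ball_def)
  qed
  show ?thesis
  proof
    assume L: "v \<in> rsd (offs n m) (sep_sum n m f) x"
    then have finF: "\<bar>sep_sum n m f x\<bar> \<noteq> \<infinity>" by (simp add: rsd_def)
    then have fin: "\<forall>i<m. \<bar>f i (blk n x i)\<bar> \<noteq> \<infinity>" using finiff[of x] by simp
    show "\<forall>i<m. blk n v i \<in> rsd (n i) (f i) (blk n x i)"
    proof (intro allI impI)
      fix i assume i: "i < m"
      have "\<forall>\<epsilon>>0. \<exists>\<delta>>0. \<forall>y\<in>Rn (n i). vdist (n i) y (blk n x i) < \<delta> \<longrightarrow>
          f i y \<ge> f i (blk n x i) + ereal (ip (n i) (blk n v i) (vdiff y (blk n x i)) - \<epsilon> * vdist (n i) y (blk n x i))"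
      proof (intro allI impI)
        fix \<epsilon> :: real assume e: "\<epsilon> > 0"
        from L e obtain \<delta> where d: "\<delta> > 0" and dP: "\<forall>z\<in>Rn (offs n m). vdist (offs n m) z x < \<delta> \<longrightarrow>
            sep_sum n m f z \<ge> sep_sum n m f x + ereal (ip (offs n m) v (vdiff z x) - \<epsilon> * vdist (offs n m) z x)"
          unfolding rsd_def by blast
        show "\<exists>\<delta>>0. \<forall>y\<in>Rn (n i). vdist (n i) y (blk n x i) < \<delta> \<longrightarrow>
          f i y \<ge> f i (blk n x i) + ereal (ip (n i) (blk n v i) (vdiff y (blk n x i)) - \<epsilon> * vdist (n i) y (blk n x i))"
        proof (intro exI conjI ballI impI)
          show "\<delta> > 0" by fact
          fix y assume y: "y \<in> Rn (n i)" and yd: "vdist (n i) y (blk n x i) < \<delta>"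
          define z where "z = concat_blocks n m (\<lambda>k. if k = i then y else blk n x k)"
          have bz: "blk n z k = (if k = i then y else blk n x k)" if "k < m" for k
            unfolding z_def using rep_blk[where n=n and x=x, OF that i y] .
          have zR: "z \<in> Rn (offs n m)" unfolding z_def by simp
          have dz: "vdist (offs n m) z x = vdist (n i) y (blk n x i)"
          proof -
            have "vdist (offs n m) z x = L2_set (\<lambda>k. if k = i then vdist (n i) y (blk n x i) else 0) {..<m}"
              unfolding vdist_blocks by (intro L2_set_cong) (auto simp: bz)
            also have "\<dots> = vdist (n i) y (blk n x i)" using i by (subst L2_set_delta) auto
            finally show ?thesis .
          qed
          have ipz: "ip (offs n m) v (vdiff z x) = ip (n i) (blk n v i) (vdiff y (blk n x i))"
          proof -
            have "ip (offs n m) v (vdiff z x) = (\<Sum>k<m. if k = i then ip (n i) (blk n v i) (vdiff y (blk n x i)) else 0)"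
              unfolding ip_blocks blk_vdiff by (intro sum.cong) (auto simp: bz ip_def vdiff_def)
            also have "\<dots> = ip (n i) (blk n v i) (vdiff y (blk n x i))" using i by simp
            finally show ?thesis .
          qed
          define S where "S = (\<Sum>k\<in>{..<m} - {i}. f k (blk n x k))"
          have Fz: "sep_sum n m f z = f i y + S"
          proof -
            have "sep_sum n m f z = f i (blk n z i) + (\<Sum>k\<in>{..<m} - {i}. f k (blk n z k))"
              unfolding sep_sum_def using i by (intro sum.remove) auto
            also have "(\<Sum>k\<in>{..<m} - {i}. f k (blk n z k)) = S"
              unfolding S_def by (intro sum.cong) (auto simp: bz)
            finally show ?thesis using bz[OF i] by simp
          qed
          have Fx: "sep_sum n m f x = f i (blk n x i) + S"
            unfolding sep_sum_def S_def using i by (intro sum.remove) auto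
          have Sfin: "\<bar>S\<bar> \<noteq> \<infinity>" unfolding S_def using fin
            by (subst sum_fin_iff) (auto simp: nmi)
          have calc: "f i y + S \<ge> f i (blk n x i) + S + ereal (ip (n i) (blk n v i) (vdiff y (blk n x i)) - \<epsilon> * vdist (n i) y (blk n x i))"
          proof -
            have "vdist (offs n m) z x < \<delta>" using dz yd by simp
            then have "sep_sum n m f z \<ge> sep_sum n m f x + ereal (ip (offs n m) v (vdiff z x) - \<epsilon> * vdist (offs n m) z x)"
              using dP zR by blast
            then show ?thesis by (simp only: ipz dz Fz Fx)
          qed
          have fy: "f i y \<noteq> -\<infinity>" using nm[OF i] y by (simp add: no_minf_def)
          have fxi: "\<bar>f i (blk n x i)\<bar> \<noteq> \<infinity>" using fin[rule_format, OF i] .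
          show "f i y \<ge> f i (blk n x i) + ereal (ip (n i) (blk n v i) (vdiff y (blk n x i)) - \<epsilon> * vdist (n i) y (blk n x i))"
            by (rule ereal_cancel[OF calc Sfin fxi fy])
        qed
      qed
      then show "blk n v i \<in> rsd (n i) (f i) (blk n x i)"
        unfolding rsd_def using fin i by auto
    qed
  next
    assume R: "\<forall>i<m. blk n v i \<in> rsd (n i) (f i) (blk n x i)"
    then have fin: "\<forall>i<m. \<bar>f i (blk n x i)\<bar> \<noteq> \<infinity>" by (auto simp: rsd_def)
    then have finF: "\<bar>sep_sum n m f x\<bar> \<noteq> \<infinity>" using finiff[of x] by simp
    have "\<forall>\<epsilon>>0. \<exists>\<delta>>0. \<forall>y\<in>Rn (offs n m). vdist (offs n m) y x < \<delta> \<longrightarrow>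
        sep_sum n m f y \<ge> sep_sum n m f x + ereal (ip (offs n m) v (vdiff y x) - \<epsilon> * vdist (offs n m) y x)"
    proof (intro allI impI)
      fix \<epsilon> :: real assume e: "\<epsilon> > 0"
      define e' where "e' = \<epsilon> / (real m + 1)"
      have e': "e' > 0" using e by (simp add: e'_def)
      have me: "real m * e' \<le> \<epsilon>" using e by (simp add: e'_def field_simps)
      have "\<forall>i. \<exists>\<delta>. i < m \<longrightarrow> \<delta> > 0 \<and> (\<forall>y\<in>Rn (n i). vdist (n i) y (blk n x i) < \<delta> \<longrightarrow>
          f i y \<ge> f i (blk n x i) + ereal (ip (n i) (blk n v i) (vdiff y (blk n x i)) - e' * vdist (n i) y (blk n x i)))"
        using R e' unfolding rsd_def by blast
      then obtain dl where dl: "\<And>i. i < m \<Longrightarrow> dl i > 0 \<and> (\<forall>y\<in>Rn (n i). vdist (n i) y (blk n x i) < dl i \<longrightarrow>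
          f i y \<ge> f i (blk n x i) + ereal (ip (n i) (blk n v i) (vdiff y (blk n x i)) - e' * vdist (n i) y (blk n x i)))"
        by (rule choice[THEN exE]) blast
      obtain d where d: "d > 0" "\<And>i. i < m \<Longrightarrow> d \<le> dl i" using pos_min[of m dl] dl by blast
      show "\<exists>\<delta>>0. \<forall>y\<in>Rn (offs n m). vdist (offs n m) y x < \<delta> \<longrightarrow>
        sep_sum n m f y \<ge> sep_sum n m f x + ereal (ip (offs n m) v (vdiff y x) - \<epsilon> * vdist (offs n m) y x)"
      proof (intro exI conjI ballI impI)
        show "d > 0" by fact
        fix y assume y: "y \<in> Rn (offs n m)" and yd: "vdist (offs n m) y x < d"
        let ?p = "\<lambda>i. ip (n i) (blk n v i) (vdiff (blk n y i) (blk n x i))"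
        let ?q = "\<lambda>i. vdist (n i) (blk n y i) (blk n x i)"
        have bi: "f i (blk n y i) \<ge> f i (blk n x i) + ereal (?p i - e' * ?q i)" if i: "i < m" for i
        proof -
          have "?q i < dl i" using vdist_blk_le[OF i, of n y x] yd d(2)[OF i] by linarith
          then show ?thesis using dl[OF i] by auto
        qed
        have "sep_sum n m f y \<ge> (\<Sum>i<m. f i (blk n x i) + ereal (?p i - e' * ?q i))"
          unfolding sep_sum_def using bi by (intro sum_mono) auto
        also have "(\<Sum>i<m. f i (blk n x i) + ereal (?p i - e' * ?q i)) = sep_sum n m f x + ereal (\<Sum>i<m. ?p i - e' * ?q i)"
          unfolding sep_sum_def by (simp add: sum.distrib)
        also have "(\<Sum>i<m. ?p i - e' * ?q i) = ip (offs n m) v (vdiff y x) - e' * (\<Sum>i<m. ?q i)"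
          by (simp add: ip_blocks blk_vdiff sum_subtractf sum_distrib_left)
        finally have A: "sep_sum n m f y \<ge> sep_sum n m f x + ereal (ip (offs n m) v (vdiff y x) - e' * (\<Sum>i<m. ?q i))" .
        have "(\<Sum>i<m. ?q i) \<le> (\<Sum>i<m. vdist (offs n m) y x)"
          by (intro sum_mono vdist_blk_le) auto
        then have "e' * (\<Sum>i<m. ?q i) \<le> e' * (real m * vdist (offs n m) y x)"
          using e' by (intro mult_left_mono) auto
        also have "\<dots> \<le> \<epsilon> * vdist (offs n m) y x"
        proof -
          have "e' * (real m * vdist (offs n m) y x) = (real m * e') * vdist (offs n m) y x" by simp
          also have "\<dots> \<le> \<epsilon> * vdist (offs n m) y x" using me by (intro mult_right_mono) auto
          finally show ?thesis .
        qed
        finally have "ereal (ip (offs n m) v (vdiff y x) - \<epsilon> * vdist (offs n m) y x) \<le> ereal (ip (offs n m) v (vdiff y x) - e' * (\<Sum>i<m. ?q i))"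
          by simp
        then have "sep_sum n m f x + ereal (ip (offs n m) v (vdiff y x) - \<epsilon> * vdist (offs n m) y x)
            \<le> sep_sum n m f x + ereal (ip (offs n m) v (vdiff y x) - e' * (\<Sum>i<m. ?q i))"
          by (rule add_left_mono)
        with A show "sep_sum n m f y \<ge> sep_sum n m f x + ereal (ip (offs n m) v (vdiff y x) - \<epsilon> * vdist (offs n m) y x)"
          by order
      qed
    qed
    then show "v \<in> rsd (offs n m) (sep_sum n m f) x"
      unfolding rsd_def using x v finF by auto
  qed
qed


lemma ereal_lim_real:
  assumes "\<And>k. \<bar>g k\<bar> \<noteq> \<infinity>" "\<bar>c\<bar> \<noteq> \<infinity>"
  shows "(g \<longlonglongrightarrow> c) \<longleftrightarrow> ((\<lambda>k. real_of_ereal (g k)) \<longlonglongrightarrow> real_of_ereal c)"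
proof -
  have g: "g = (\<lambda>k. ereal (real_of_ereal (g k)))" using assms(1) by (auto simp: ereal_real')
  have c: "c = ereal (real_of_ereal c)" using assms(2) by (auto simp: ereal_real')
  show ?thesis by (subst g, subst c) (rule lim_ereal)
qed

lemma vdist_blk_tendsto:
  assumes "(\<lambda>k. vdist (offs n m) (X k) y) \<longlonglongrightarrow> 0" "i < m"
  shows "(\<lambda>k. vdist (n i) (blk n (X k) i) (blk n y i)) \<longlonglongrightarrow> 0"
proof (rule tendsto_sandwich[OF _ _ tendsto_const assms(1)])
  show "\<forall>\<^sub>F k in sequentially. (0::real) \<le> vdist (n i) (blk n (X k) i) (blk n y i)" by simp
  show "\<forall>\<^sub>F k in sequentially. vdist (n i) (blk n (X k) i) (blk n y i) \<le> vdist (offs n m) (X k) y"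
    using assms(2) by (simp add: vdist_blk_le)
qed

lemma L2_set_tendsto0:
  assumes "\<And>i. i \<in> A \<Longrightarrow> (\<lambda>k. a k i) \<longlonglongrightarrow> (0::real)"
  shows "(\<lambda>k. L2_set (a k) A) \<longlonglongrightarrow> 0"
proof -
  have "(\<lambda>k. sqrt (\<Sum>i\<in>A. (a k i)^2)) \<longlonglongrightarrow> sqrt (\<Sum>i\<in>A. 0^2)"
    using assms by (intro tendsto_intros) auto
  then show ?thesis by (simp add: L2_set_def)
qed

lemma sum_parts_tendsto:
  fixes a :: "nat \<Rightarrow> 'i \<Rightarrow> real"
  assumes A: "finite A" "i \<in> A"
    and S: "(\<lambda>k. \<Sum>j\<in>A. a k j) \<longlonglongrightarrow> (\<Sum>j\<in>A. b j)"
    and L: "\<And>j \<eta>. j \<in> A \<Longrightarrow> \<eta> > 0 \<Longrightarrow> eventually (\<lambda>k. b j - \<eta> < a k j) sequentially"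
  shows "(\<lambda>k. a k i) \<longlonglongrightarrow> b i"
  unfolding tendsto_iff
proof (intro allI impI)
  fix \<eta> :: real assume eta: "\<eta> > 0"
  define c where "c = real (card A)"
  have c: "c \<ge> 1" using A by (auto simp: c_def Suc_le_eq card_gt_0_iff)
  define e where "e = \<eta> / (2 * c)"
  have e: "e > 0" using eta c by (simp add: e_def)
  have ce: "c * e = \<eta> / 2" using c by (simp add: e_def)
  have ev1: "eventually (\<lambda>k. dist (\<Sum>j\<in>A. a k j) (\<Sum>j\<in>A. b j) < \<eta> / 2) sequentially"
    using S eta unfolding tendsto_iff by (meson half_gt_zero)
  have ev2: "eventually (\<lambda>k. \<forall>j\<in>A. b j - e < a k j) sequentially"
    using A(1) L e by (intro eventually_ball_finite) auto
  show "eventually (\<lambda>k. dist (a k i) (b i) < \<eta>) sequentially"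
    using ev1 ev2
  proof eventually_elim
    case (elim k)
    have r: "(\<Sum>j\<in>A. a k j - b j) = (a k i - b i) + (\<Sum>j\<in>A - {i}. a k j - b j)"
      using A by (intro sum.remove) auto
    have h1: "(\<Sum>j\<in>A - {i}. - e) \<le> (\<Sum>j\<in>A - {i}. a k j - b j)"
      using elim(2) by (intro sum_mono) (auto simp: algebra_simps)
    have h2: "(\<Sum>j\<in>A - {i}. - e) = - real (card (A - {i})) * e" by simp
    have h3: "real (card (A - {i})) \<le> c" unfolding c_def using A by (simp add: card_Diff_subset)
    have "real (card (A - {i})) * e \<le> c * e"
      using h3 e by (intro mult_right_mono) auto
    then have lo: "(\<Sum>j\<in>A - {i}. a k j - b j) \<ge> - (\<eta> / 2)" using h1 h2 ce by linarith
    have "(\<Sum>j\<in>A. a k j - b j) = (\<Sum>j\<in>A. a k j) - (\<Sum>j\<in>A. b j)" by (simp add: sum_subtractf)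
    then have up: "a k i - b i < \<eta>" using r lo elim(1) unfolding dist_real_def abs_less_iff by linarith
    have "e \<le> c * e" using c e by (simp add: mult_le_cancel_right1)
    then have "e \<le> \<eta>" using ce eta by linarith
    then have "a k i - b i > - \<eta>" using elim(2) A(2) by force
    then show ?case using up by (simp add: dist_real_def abs_less_iff)
  qed
qed


lemma fin_blocks:
  assumes nm: "\<And>i. i < m \<Longrightarrow> no_minf (n i) (f i)"
  shows "\<bar>sep_sum n m f y\<bar> \<noteq> \<infinity> \<longleftrightarrow> (\<forall>i<m. \<bar>f i (blk n y i)\<bar> \<noteq> \<infinity>)"
proof -
  have nmi: "f i (blk n y i) \<noteq> -\<infinity>" if "i < m" for i
    using nm[OF that] by (simp add: no_minf_def)
  have "\<bar>(\<Sum>i<m. f i (blk n y i))\<bar> \<noteq> \<infinity> \<longleftrightarrow> (\<forall>i\<in>{..<m}. \<bar>f i (blk n y i)\<bar> \<noteq> \<infinity>)"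
    by (rule sum_fin_iff) (auto simp: nmi)
  then show ?thesis unfolding sep_sum_def by (simp add: Ball_def)
qed

lemma sep_real:
  assumes "\<forall>i<m. \<bar>f i (blk n y i)\<bar> \<noteq> \<infinity>"
  shows "sep_sum n m f y = ereal (\<Sum>i<m. real_of_ereal (f i (blk n y i)))"
  unfolding sep_sum_def using assms by (intro ereal_sum_fin) auto

lemma lsd_sep:
  assumes nm: "\<And>i. i < m \<Longrightarrow> no_minf (n i) (f i)"
    and lsc: "\<And>i. i < m \<Longrightarrow> lsc_n (n i) (f i)"
    and x: "x \<in> Rn (offs n m)"
  shows "v \<in> lsd (offs n m) (sep_sum n m f) x \<longleftrightarrow>
    v \<in> Rn (offs n m) \<and> (\<forall>i<m. blk n v i \<in> lsd (n i) (f i) (blk n x i))"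
proof
  assume L: "v \<in> lsd (offs n m) (sep_sum n m f) x"
  then have v: "v \<in> Rn (offs n m)" and finF: "\<bar>sep_sum n m f x\<bar> \<noteq> \<infinity>" by (auto simp: lsd_def)
  from L obtain X W where W: "\<And>k. W k \<in> rsd (offs n m) (sep_sum n m f) (X k)"
    and Xc: "(\<lambda>k. vdist (offs n m) (X k) x) \<longlonglongrightarrow> 0"
    and Fc: "(\<lambda>k. sep_sum n m f (X k)) \<longlonglongrightarrow> sep_sum n m f x"
    and Wc: "(\<lambda>k. vdist (offs n m) (W k) v) \<longlonglongrightarrow> 0"
    unfolding lsd_def by blast
  have XR: "X k \<in> Rn (offs n m)" and WR: "W k \<in> Rn (offs n m)" and finX: "\<bar>sep_sum n m f (X k)\<bar> \<noteq> \<infinity>" for k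
    using W[of k] by (auto simp: rsd_def)
  have fin: "\<forall>i<m. \<bar>f i (blk n x i)\<bar> \<noteq> \<infinity>" using finF fin_blocks[OF nm, of m] by simp
  have finXi: "\<forall>i<m. \<bar>f i (blk n (X k) i)\<bar> \<noteq> \<infinity>" for k using finX[of k] fin_blocks[OF nm, of m] by simp
  have Wi: "blk n (W k) i \<in> rsd (n i) (f i) (blk n (X k) i)" if "i < m" for k i
    using rsd_sep[OF nm XR WR, of k k] W[of k] that by auto
  define a where "a k j = real_of_ereal (f j (blk n (X k) j))" for k j
  define b where "b j = real_of_ereal (f j (blk n x j))" for j
  have Sa: "(\<lambda>k. \<Sum>j\<in>{..<m}. a k j) \<longlonglongrightarrow> (\<Sum>j\<in>{..<m}. b j)"
  proof -
    have s1: "sep_sum n m f (X k) = ereal (\<Sum>j<m. a k j)" for k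
      unfolding a_def by (rule sep_real) (rule finXi)
    have s2: "sep_sum n m f x = ereal (\<Sum>j<m. b j)"
      unfolding b_def by (rule sep_real) (rule fin)
    have "(\<lambda>k. ereal (\<Sum>j<m. a k j)) \<longlonglongrightarrow> ereal (\<Sum>j<m. b j)"
      using Fc unfolding s1 s2 .
    then show ?thesis by simp
  qed
  have Lo: "eventually (\<lambda>k. b j - \<eta> < a k j) sequentially" if j: "j \<in> {..<m}" and eta: "\<eta> > 0" for j \<eta>
  proof -
    have jm: "j < m" using j by simp
    have fj: "\<bar>f j (blk n x j)\<bar> \<noteq> \<infinity>" using fin[rule_format, OF jm] .
    have "ereal (b j - \<eta>) < f j (blk n x j)"
      using fj eta unfolding b_def by (cases "f j (blk n x j)") auto
    then obtain \<delta> where d: "\<delta> > 0" and dP: "\<forall>y\<in>Rn (n j). vdist (n j) y (blk n x j) < \<delta> \<longrightarrow> ereal (b j - \<eta>) < f j y"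
      using lsc[OF jm] unfolding lsc_n_def by (meson blk_Rn)
    have "eventually (\<lambda>k. vdist (n j) (blk n (X k) j) (blk n x j) < \<delta>) sequentially"
      using vdist_blk_tendsto[OF Xc jm] d unfolding tendsto_iff by (simp add: dist_real_def)
    then show ?thesis
    proof eventually_elim
      case (elim k)
      then have "ereal (b j - \<eta>) < f j (blk n (X k) j)" using dP by simp
      moreover have "\<bar>f j (blk n (X k) j)\<bar> \<noteq> \<infinity>" using finXi[of k] jm by simp
      ultimately show ?case unfolding a_def by (cases "f j (blk n (X k) j)") auto
    qed
  qed
  show "v \<in> Rn (offs n m) \<and> (\<forall>i<m. blk n v i \<in> lsd (n i) (f i) (blk n x i))"
  proof (intro conjI allI impI)
    show "v \<in> Rn (offs n m)" by fact
    fix i assume i: "i < m"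
    have ai: "(\<lambda>k. a k i) \<longlonglongrightarrow> b i"
      using i by (intro sum_parts_tendsto[OF _ _ Sa Lo]) auto
    have fi: "\<bar>f i (blk n x i)\<bar> \<noteq> \<infinity>" using fin[rule_format, OF i] .
    have fc: "(\<lambda>k. f i (blk n (X k) i)) \<longlonglongrightarrow> f i (blk n x i)"
      using ai unfolding a_def b_def
      by (subst ereal_lim_real) (use finXi i fi in auto)
    show "blk n v i \<in> lsd (n i) (f i) (blk n x i)"
      unfolding lsd_def
      using fi vdist_blk_tendsto[OF Xc i] vdist_blk_tendsto[OF Wc i] fc Wi[OF i]
      by (intro CollectI conjI blk_Rn exI[of _ "\<lambda>k. blk n (X k) i"] exI[of _ "\<lambda>k. blk n (W k) i"]) auto
  qed
next
  assume R: "v \<in> Rn (offs n m) \<and> (\<forall>i<m. blk n v i \<in> lsd (n i) (f i) (blk n x i))"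
  then have v: "v \<in> Rn (offs n m)" and Ri: "\<And>i. i < m \<Longrightarrow> blk n v i \<in> lsd (n i) (f i) (blk n x i)" by auto
  have fin: "\<forall>i<m. \<bar>f i (blk n x i)\<bar> \<noteq> \<infinity>" using Ri by (simp add: lsd_def)
  then have finF: "\<bar>sep_sum n m f x\<bar> \<noteq> \<infinity>" using fin_blocks[OF nm, of m] by simp
  have "\<forall>i. \<exists>p. i < m \<longrightarrow> (\<forall>k. snd p k \<in> rsd (n i) (f i) (fst p k)) \<and>
        (\<lambda>k. vdist (n i) (fst p k) (blk n x i)) \<longlonglongrightarrow> 0 \<and>
        (\<lambda>k. f i (fst p k)) \<longlonglongrightarrow> f i (blk n x i) \<and>
        (\<lambda>k. vdist (n i) (snd p k) (blk n v i)) \<longlonglongrightarrow> 0"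
  proof (intro allI impI)
    fix i show "\<exists>p. i < m \<longrightarrow> (\<forall>k. snd p k \<in> rsd (n i) (f i) (fst p k)) \<and>
        (\<lambda>k. vdist (n i) (fst p k) (blk n x i)) \<longlonglongrightarrow> 0 \<and>
        (\<lambda>k. f i (fst p k)) \<longlonglongrightarrow> f i (blk n x i) \<and>
        (\<lambda>k. vdist (n i) (snd p k) (blk n v i)) \<longlonglongrightarrow> 0"
    proof (cases "i < m")
      case True
      then obtain xs vs where "(\<forall>k. vs k \<in> rsd (n i) (f i) (xs k)) \<and>
        (\<lambda>k. vdist (n i) (xs k) (blk n x i)) \<longlonglongrightarrow> 0 \<and>
        (\<lambda>k. f i (xs k)) \<longlonglongrightarrow> f i (blk n x i) \<and>
        (\<lambda>k. vdist (n i) (vs k) (blk n v i)) \<longlonglongrightarrow> 0"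
        using Ri[OF True] unfolding lsd_def by blast
      then show ?thesis by (intro exI[of _ "(xs, vs)"]) simp
    qed simp
  qed
  then obtain p where p: "\<And>i. i < m \<Longrightarrow> (\<forall>k. snd (p i) k \<in> rsd (n i) (f i) (fst (p i) k)) \<and>
        (\<lambda>k. vdist (n i) (fst (p i) k) (blk n x i)) \<longlonglongrightarrow> 0 \<and>
        (\<lambda>k. f i (fst (p i) k)) \<longlonglongrightarrow> f i (blk n x i) \<and>
        (\<lambda>k. vdist (n i) (snd (p i) k) (blk n v i)) \<longlonglongrightarrow> 0"
    by (rule choice[THEN exE]) auto
  define XS where "XS i = fst (p i)" for i
  define VS where "VS i = snd (p i)" for i
  have rs: "VS i k \<in> rsd (n i) (f i) (XS i k)" if "i < m" for i k using p[OF that] by (simp add: XS_def VS_def)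
  have XSR: "XS i k \<in> Rn (n i)" and VSR: "VS i k \<in> Rn (n i)" and finXS: "\<bar>f i (XS i k)\<bar> \<noteq> \<infinity>" if "i < m" for i k
    using rs[OF that, of k] by (auto simp: rsd_def)
  define X where "X k = concat_blocks n m (\<lambda>i. XS i k)" for k
  define W where "W k = concat_blocks n m (\<lambda>i. VS i k)" for k
  have bX: "blk n (X k) i = XS i k" if "i < m" for i k
    unfolding X_def using that XSR[OF that] by (intro concat_blk) auto
  have bW: "blk n (W k) i = VS i k" if "i < m" for i k
    unfolding W_def using that VSR[OF that] by (intro concat_blk) auto
  have WX: "W k \<in> rsd (offs n m) (sep_sum n m f) (X k)" for k
  proof -
    have "\<forall>i<m. blk n (W k) i \<in> rsd (n i) (f i) (blk n (X k) i)" using rs bX bW by simp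
    then show ?thesis using rsd_sep[OF nm, where x="X k" and v="W k"] by (simp add: X_def W_def)
  qed
  have Xc: "(\<lambda>k. vdist (offs n m) (X k) x) \<longlonglongrightarrow> 0"
  proof -
    have "(\<lambda>k. L2_set (\<lambda>i. vdist (n i) (blk n (X k) i) (blk n x i)) {..<m}) \<longlonglongrightarrow> 0"
      using p by (intro L2_set_tendsto0) (simp add: bX XS_def)
    then show ?thesis by (simp add: vdist_blocks)
  qed
  have Wc: "(\<lambda>k. vdist (offs n m) (W k) v) \<longlonglongrightarrow> 0"
  proof -
    have "(\<lambda>k. L2_set (\<lambda>i. vdist (n i) (blk n (W k) i) (blk n v i)) {..<m}) \<longlonglongrightarrow> 0"
      using p by (intro L2_set_tendsto0) (simp add: bW VS_def)
    then show ?thesis by (simp add: vdist_blocks)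
  qed
  have Fc: "(\<lambda>k. sep_sum n m f (X k)) \<longlonglongrightarrow> sep_sum n m f x"
  proof -
    have finXk: "\<forall>i<m. \<bar>f i (blk n (X k) i)\<bar> \<noteq> \<infinity>" for k using finXS bX by simp
    have ri: "(\<lambda>k. real_of_ereal (f i (blk n (X k) i))) \<longlonglongrightarrow> real_of_ereal (f i (blk n x i))" if i: "i \<in> {..<m}" for i
    proof -
      have im: "i < m" using i by simp
      have "(\<lambda>k. f i (XS i k)) \<longlonglongrightarrow> f i (blk n x i)" using p[OF im] by (simp add: XS_def)
      then have "(\<lambda>k. real_of_ereal (f i (XS i k))) \<longlonglongrightarrow> real_of_ereal (f i (blk n x i))"
        by (subst (asm) ereal_lim_real) (use finXS[OF im] fin[rule_format, OF im] in auto)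
      then show ?thesis using bX[OF im] by simp
    qed
    have "(\<lambda>k. \<Sum>i<m. real_of_ereal (f i (blk n (X k) i))) \<longlonglongrightarrow> (\<Sum>i<m. real_of_ereal (f i (blk n x i)))"
      using ri by (intro tendsto_sum) auto
    moreover have s1: "sep_sum n m f (X k) = ereal (\<Sum>i<m. real_of_ereal (f i (blk n (X k) i)))" for k
      by (rule sep_real) (rule finXk)
    moreover have s2: "sep_sum n m f x = ereal (\<Sum>i<m. real_of_ereal (f i (blk n x i)))"
      by (rule sep_real) (rule fin)
    ultimately show ?thesis by simp
  qed
  show "v \<in> lsd (offs n m) (sep_sum n m f) x"
    unfolding lsd_def using x v finF WX Xc Fc Wc by blast
qed


lemma lsc_blk:
  assumes "i < m" "lsc_n (n i) h"
  shows "lsc_n (offs n m) (\<lambda>x. h (blk n x i))"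
  unfolding lsc_n_def
proof (intro ballI allI impI)
  fix x c assume x: "x \<in> Rn (offs n m)" and c: "c < h (blk n x i)"
  then obtain \<delta> where d: "\<delta> > 0" "\<forall>y\<in>Rn (n i). vdist (n i) y (blk n x i) < \<delta> \<longrightarrow> c < h y"
    using assms(2) unfolding lsc_n_def by (meson blk_Rn)
  show "\<exists>\<delta>>0. \<forall>y\<in>Rn (offs n m). vdist (offs n m) y x < \<delta> \<longrightarrow> c < h (blk n y i)"
  proof (intro exI conjI ballI impI)
    show "\<delta> > 0" by fact
    fix y assume "y \<in> Rn (offs n m)" "vdist (offs n m) y x < \<delta>"
    then have "vdist (n i) (blk n y i) (blk n x i) < \<delta>" using vdist_blk_le[OF assms(1), of n y x] by linarith
    then show "c < h (blk n y i)" using d(2) by simp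
  qed
qed

lemma no_minf_blk: "no_minf (n i) h \<Longrightarrow> no_minf N (\<lambda>x. h (blk n x i))"
  unfolding no_minf_def by simp

lemma ereal_split:
  assumes "ereal r < a + b" "a \<noteq> -\<infinity>" "b \<noteq> -\<infinity>"
  shows "\<exists>c1 c2. ereal c1 < a \<and> ereal c2 < b \<and> r = c1 + c2"
proof (cases a)
  case (real p)
  show ?thesis
  proof (cases b)
    case (real q)
    then show ?thesis using \<open>a = ereal p\<close> assms(1)
      by (intro exI[of _ "p - (p + q - r) / 2"] exI[of _ "q - (p + q - r) / 2"]) auto
  next
    case PInf
    then show ?thesis using \<open>a = ereal p\<close>
      by (intro exI[of _ "p - 1"] exI[of _ "r - p + 1"]) auto
  qed (use assms in auto)
next
  case PInf
  show ?thesis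
  proof (cases b)
    case (real q)
    then show ?thesis using \<open>a = \<infinity>\<close>
      by (intro exI[of _ "r - q + 1"] exI[of _ "q - 1"]) auto
  next
    case PInf
    then show ?thesis using \<open>a = \<infinity>\<close>
      by (intro exI[of _ "r"] exI[of _ "0"]) auto
  qed (use assms in auto)
qed (use assms in auto)

lemma ereal_add_less:
  fixes a b :: ereal
  shows "ereal c1 < a \<Longrightarrow> ereal c2 < b \<Longrightarrow> ereal (c1 + c2) < a + b"
  by (cases a; cases b) auto

lemma lsc_add:
  assumes g: "lsc_n N g" "no_minf N g" and h: "lsc_n N h" "no_minf N h"
  shows "lsc_n N (\<lambda>x. g x + h x)"
  unfolding lsc_n_def
proof (intro ballI allI impI)
  fix x c assume x: "x \<in> Rn N" and c: "c < g x + h x"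
  have nm: "g y + h y \<noteq> -\<infinity>" if "y \<in> Rn N" for y
    using g(2) h(2) that unfolding no_minf_def by (cases "g y"; cases "h y") auto
  show "\<exists>\<delta>>0. \<forall>y\<in>Rn N. vdist N y x < \<delta> \<longrightarrow> c < g y + h y"
  proof (cases c)
    case MInf
    then show ?thesis using nm by (intro exI[of _ 1]) auto
  next
    case PInf
    then show ?thesis using c by simp
  next
    case (real r)
    have gx: "g x \<noteq> -\<infinity>" "h x \<noteq> -\<infinity>" using g(2) h(2) x unfolding no_minf_def by auto
    obtain c1 c2 where cc: "ereal c1 < g x" "ereal c2 < h x" "r = c1 + c2"
      using ereal_split[OF _ gx] c real by blast
    obtain d1 where d1: "d1 > 0" "\<forall>y\<in>Rn N. vdist N y x < d1 \<longrightarrow> ereal c1 < g y"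
      using g(1) x cc(1) unfolding lsc_n_def by blast
    obtain d2 where d2: "d2 > 0" "\<forall>y\<in>Rn N. vdist N y x < d2 \<longrightarrow> ereal c2 < h y"
      using h(1) x cc(2) unfolding lsc_n_def by blast
    show ?thesis
    proof (intro exI[of _ "min d1 d2"] conjI ballI impI)
      show "min d1 d2 > 0" using d1 d2 by simp
      fix y assume "y \<in> Rn N" "vdist N y x < min d1 d2"
      then have "ereal c1 < g y" "ereal c2 < h y" using d1 d2 by auto
      then show "c < g y + h y" using real cc(3) ereal_add_less by simp
    qed
  qed
qed

lemma ereal_add_noninf: "a \<noteq> -\<infinity> \<Longrightarrow> b \<noteq> -\<infinity> \<Longrightarrow> (a::ereal) + b \<noteq> -\<infinity>"
  by (cases a; cases b) auto

lemma lsc_sum: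
  assumes "\<And>i. i < (k::nat) \<Longrightarrow> lsc_n N (g i)" "\<And>i. i < k \<Longrightarrow> no_minf N (g i)"
  shows "lsc_n N (\<lambda>x. \<Sum>i<k. g i x) \<and> no_minf N (\<lambda>x. \<Sum>i<k. g i x)"
  using assms
proof (induction k)
  case 0
  show ?case by (auto simp: lsc_n_def no_minf_def intro: exI[of _ "1::real"])
next
  case (Suc k)
  then have IH: "lsc_n N (\<lambda>x. \<Sum>i<k. g i x)" "no_minf N (\<lambda>x. \<Sum>i<k. g i x)" by auto
  have gk: "lsc_n N (g k)" "no_minf N (g k)" using Suc.prems by auto
  have "lsc_n N (\<lambda>x. (\<Sum>i<k. g i x) + g k x)"
    using lsc_add[OF IH(1) IH(2) gk(1) gk(2)] .
  moreover have "no_minf N (\<lambda>x. (\<Sum>i<k. g i x) + g k x)"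
    using IH(2) gk(2) unfolding no_minf_def
    by (simp add: ereal_add_noninf)
  ultimately show ?case by simp
qed

lemma convex_blk: "convex_fn_n (n i) h \<Longrightarrow> convex_fn_n N (\<lambda>x. h (blk n x i))"
  unfolding convex_fn_n_def blk_vcomb by simp

lemma ereal_conv_id:
  fixes a b c d :: ereal
  assumes "0 < t" "t < 1" "a \<noteq> -\<infinity>" "b \<noteq> -\<infinity>" "c \<noteq> -\<infinity>" "d \<noteq> -\<infinity>"
  shows "ereal t * a + ereal (1-t) * b + (ereal t * c + ereal (1-t) * d) = ereal t * (a + c) + ereal (1-t) * (b + d)"
  using assms by (cases a; cases b; cases c; cases d) (auto simp: algebra_simps)

lemma convex_add:
  assumes g: "convex_fn_n N g" "no_minf N g" and h: "convex_fn_n N h" "no_minf N h"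
  shows "convex_fn_n N (\<lambda>x. g x + h x)"
  unfolding convex_fn_n_def
proof (intro ballI)
  fix x y t assume x: "x \<in> Rn N" and y: "y \<in> Rn N" and t: "t \<in> {0<..<1::real}"
  have "g (vcomb t x y) + h (vcomb t x y) \<le> (ereal t * g x + ereal (1-t) * g y) + (ereal t * h x + ereal (1-t) * h y)"
    using g(1) h(1) x y t unfolding convex_fn_n_def by (intro add_mono) auto
  also have "\<dots> = ereal t * (g x + h x) + ereal (1-t) * (g y + h y)"
    using g(2) h(2) x y t unfolding no_minf_def by (intro ereal_conv_id) auto
  finally show "g (vcomb t x y) + h (vcomb t x y) \<le> ereal t * (g x + h x) + ereal (1-t) * (g y + h y)" .
qed

lemma convex_sum:
  assumes "\<And>i. i < (k::nat) \<Longrightarrow> convex_fn_n N (g i)" "\<And>i. i < k \<Longrightarrow> no_minf N (g i)"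
  shows "convex_fn_n N (\<lambda>x. \<Sum>i<k. g i x)"
  using assms
proof (induction k)
  case 0
  show ?case by (auto simp: convex_fn_n_def)
next
  case (Suc k)
  then have IH: "convex_fn_n N (\<lambda>x. \<Sum>i<k. g i x)" by auto
  have nmk: "no_minf N (\<lambda>x. \<Sum>i<k. g i x)"
    using Suc.prems(2) unfolding no_minf_def
    by (auto intro!: sum_noninf)
  have gk: "convex_fn_n N (g k)" "no_minf N (g k)" using Suc.prems by auto
  have "convex_fn_n N (\<lambda>x. (\<Sum>i<k. g i x) + g k x)"
    using convex_add[OF IH nmk gk(1) gk(2)] .
  then show ?case by simp
qed


lemma vdiff_vcomb: "vdiff (vcomb t y x) x = (\<lambda>j. t * vdiff y x j)"
  by (auto simp: vdiff_def vcomb_def algebra_simps)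

lemma vdist_vcomb_x: "0 \<le> t \<Longrightarrow> vdist n (vcomb t y x) x = t * vdist n y x"
  unfolding vdist_L2 vdiff_vcomb by (simp add: L2_set_right_distrib)

lemma ip_scale: "ip n v (\<lambda>j. t * w j) = t * ip n v w"
  unfolding ip_def by (simp add: sum_distrib_left algebra_simps)

lemma rsd_convex_global:
  assumes conv: "convex_fn_n n \<phi>" and nm: "no_minf n \<phi>" and v: "v \<in> rsd n \<phi> x" and y: "y \<in> Rn n"
  shows "\<phi> y \<ge> \<phi> x + ereal (ip n v (vdiff y x))"
proof (rule ccontr)
  assume C: "\<not> ?thesis"
  have x: "x \<in> Rn n" and fx: "\<bar>\<phi> x\<bar> \<noteq> \<infinity>" using v by (auto simp: rsd_def)
  obtain P where P: "\<phi> x = ereal P" using fx by (cases "\<phi> x") auto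
  have "\<phi> y \<noteq> -\<infinity>" using nm y by (simp add: no_minf_def)
  moreover have "\<phi> y \<noteq> \<infinity>" using C by auto
  ultimately obtain Q where Q: "\<phi> y = ereal Q" by (cases "\<phi> y") auto
  define I where "I = ip n v (vdiff y x)"
  define D where "D = vdist n y x"
  define g where "g = P + I - Q"
  have g: "g > 0" using C P Q by (simp add: g_def I_def)
  have D: "D \<ge> 0" by (simp add: D_def)
  define \<epsilon> where "\<epsilon> = g / (2 * (D + 1))"
  have e: "\<epsilon> > 0" using g D by (simp add: \<epsilon>_def)
  have eD: "\<epsilon> * D < g"
  proof -
    have "\<epsilon> * D = g * D / (2 * (D + 1))" by (simp add: \<epsilon>_def)
    also have "\<dots> < g"
    proof -
      have pos: "2 * (D + 1) > 0" using D by simp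
      have "g * D < g * (2 * (D + 1))" using g D by (intro mult_strict_left_mono) auto
      then show ?thesis using pos by (simp add: pos_divide_less_eq mult.commute)
    qed
    finally show ?thesis .
  qed
  obtain \<delta> where d: "\<delta> > 0" and dP: "\<forall>z\<in>Rn n. vdist n z x < \<delta> \<longrightarrow>
      \<phi> z \<ge> \<phi> x + ereal (ip n v (vdiff z x) - \<epsilon> * vdist n z x)"
    using v e unfolding rsd_def by blast
  define t where "t = min (1/2) (\<delta> / (2 * (D + 1)))"
  have t0: "t > 0" using d D by (simp add: t_def)
  have t1: "t < 1" by (simp add: t_def)
  define z where "z = vcomb t y x"
  have zR: "z \<in> Rn n" unfolding z_def using y x by (rule vcomb_Rn)
  have dz: "vdist n z x = t * D" unfolding z_def D_def using t0 by (simp add: vdist_vcomb_x)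
  have "t * D < \<delta>"
  proof -
    have "t * D \<le> \<delta> / (2 * (D + 1)) * D" using D by (intro mult_right_mono) (auto simp: t_def)
    also have "\<dots> < \<delta>"
    proof -
      have pos: "2 * (D + 1) > 0" using D by simp
      have "\<delta> * D < \<delta> * (2 * (D + 1))" using d D by (intro mult_strict_left_mono) auto
      then show ?thesis using pos by (simp add: pos_divide_less_eq mult.commute)
    qed
    finally show ?thesis .
  qed
  then have "vdist n z x < \<delta>" using dz by simp
  then have "\<phi> z \<ge> \<phi> x + ereal (ip n v (vdiff z x) - \<epsilon> * vdist n z x)" using dP[rule_format, OF zR] by simp
  moreover have "ip n v (vdiff z x) = t * I" unfolding z_def vdiff_vcomb ip_scale I_def ..
  ultimately have lo: "\<phi> z \<ge> ereal (P + t * I - \<epsilon> * (t * D))" using P dz by (simp add: algebra_simps)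
  have "\<phi> z \<le> ereal t * \<phi> y + ereal (1 - t) * \<phi> x"
    using conv x y t0 t1 unfolding convex_fn_n_def z_def by auto
  then have up: "\<phi> z \<le> ereal (t * Q + (1 - t) * P)" using P Q by simp
  from lo up have "P + t * I - \<epsilon> * (t * D) \<le> t * Q + (1 - t) * P" by (metis ereal_less_eq(3) order_trans)
  then have "t * (P + I - Q) \<le> t * (\<epsilon> * D)" by (simp add: algebra_simps)
  then have "g \<le> \<epsilon> * D" using t0 by (simp add: g_def)
  then show False using eD by simp
qed

lemma coord_tendsto:
  assumes "(\<lambda>k. vdist n (X k) x) \<longlonglongrightarrow> 0" "j < n"
  shows "(\<lambda>k. X k j) \<longlonglongrightarrow> x j"
proof -
  have "(\<lambda>k. X k j - x j) \<longlonglongrightarrow> 0"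
  proof (rule tendsto_sandwich[OF _ _ _ assms(1)])
    show "\<forall>\<^sub>F k in sequentially. - vdist n (X k) x \<le> X k j - x j"
    proof (intro always_eventually allI)
      fix k show "- vdist n (X k) x \<le> X k j - x j" using coord_le_vdist[OF assms(2), of "X k" x] by (simp add: abs_le_iff)
    qed
    show "\<forall>\<^sub>F k in sequentially. X k j - x j \<le> vdist n (X k) x"
    proof (intro always_eventually allI)
      fix k show "X k j - x j \<le> vdist n (X k) x" using coord_le_vdist[OF assms(2), of "X k" x] by (simp add: abs_le_iff)
    qed
    show "(\<lambda>k. - vdist n (X k) x) \<longlonglongrightarrow> 0" using tendsto_minus[OF assms(1)] by simp
  qed
  then have "(\<lambda>k. (X k j - x j) + x j) \<longlonglongrightarrow> 0 + x j" by (intro tendsto_add) auto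
  then show ?thesis by simp
qed

lemma lsd_convex_global:
  assumes conv: "convex_fn_n n \<phi>" and nm: "no_minf n \<phi>" and v: "v \<in> lsd n \<phi> x" and y: "y \<in> Rn n"
  shows "\<phi> y \<ge> \<phi> x + ereal (ip n v (vdiff y x))"
proof (cases "\<phi> y = \<infinity>")
  case True then show ?thesis by simp
next
  case False
  have "\<phi> y \<noteq> -\<infinity>" using nm y by (simp add: no_minf_def)
  with False obtain Q where Q: "\<phi> y = ereal Q" by (cases "\<phi> y") auto
  have fx: "\<bar>\<phi> x\<bar> \<noteq> \<infinity>" using v by (simp add: lsd_def)
  from v obtain X W where W: "\<And>k. W k \<in> rsd n \<phi> (X k)"
    and Xc: "(\<lambda>k. vdist n (X k) x) \<longlonglongrightarrow> 0"
    and Fc: "(\<lambda>k. \<phi> (X k)) \<longlonglongrightarrow> \<phi> x"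
    and Wc: "(\<lambda>k. vdist n (W k) v) \<longlonglongrightarrow> 0"
    unfolding lsd_def by blast
  have fX: "\<bar>\<phi> (X k)\<bar> \<noteq> \<infinity>" for k using W[of k] by (simp add: rsd_def)
  have pc: "(\<lambda>k. real_of_ereal (\<phi> (X k))) \<longlonglongrightarrow> real_of_ereal (\<phi> x)"
    using Fc by (subst (asm) ereal_lim_real) (use fX fx in auto)
  have ic: "(\<lambda>k. ip n (W k) (vdiff y (X k))) \<longlonglongrightarrow> ip n v (vdiff y x)"
    unfolding ip_def vdiff_def
    by (intro tendsto_intros coord_tendsto[OF Wc] coord_tendsto[OF Xc]) auto
  have ineq: "real_of_ereal (\<phi> (X k)) + ip n (W k) (vdiff y (X k)) \<le> Q" for k
  proof -
    have "\<phi> y \<ge> \<phi> (X k) + ereal (ip n (W k) (vdiff y (X k)))"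
      by (rule rsd_convex_global[OF conv nm W y])
    then show ?thesis using Q fX[of k] by (cases "\<phi> (X k)") auto
  qed
  have "real_of_ereal (\<phi> x) + ip n v (vdiff y x) \<le> Q"
    by (rule tendsto_le[OF _ tendsto_const tendsto_add[OF pc ic]]) (use ineq in auto)
  then show ?thesis using Q fx by (cases "\<phi> x") auto
qed


definition VC where
  "VC n h xb vb U V \<phi> \<epsilon> \<longleftrightarrow> convex_set_n n U \<and> convex_set_n n V \<and> nhd_n n U xb \<and> nhd_n n V vb \<and>
        lsc_n n \<phi> \<and> no_minf n \<phi> \<and> convex_fn_n n \<phi> \<and> (\<forall>x\<in>U. \<phi> x \<le> h x) \<and> \<epsilon> > 0 \<and>
        {(x, v). x \<in> U \<and> h x < h xb + ereal \<epsilon> \<and> v \<in> V \<and> v \<in> lsd n h x}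
          = {(x, v). x \<in> U \<and> v \<in> V \<and> v \<in> lsd n \<phi> x} \<and>
        (\<forall>x v. x \<in> U \<and> v \<in> V \<and> v \<in> lsd n \<phi> x \<longrightarrow> h x = \<phi> x)"

lemma var_convex_VC: "var_convex n h xb vb \<longleftrightarrow> vb \<in> lsd n h xb \<and> (\<exists>U V \<phi> \<epsilon>. VC n h xb vb U V \<phi> \<epsilon>)"
  unfolding var_convex_def VC_def by simp

lemma VC_iff:
  assumes "VC n h xb vb U V \<phi> \<epsilon>"
  shows "(x \<in> U \<and> h x < h xb + ereal \<epsilon> \<and> v \<in> V \<and> v \<in> lsd n h x) \<longleftrightarrow> (x \<in> U \<and> v \<in> V \<and> v \<in> lsd n \<phi> x)"
proof -
  have eq: "{(x, v). x \<in> U \<and> h x < h xb + ereal \<epsilon> \<and> v \<in> V \<and> v \<in> lsd n h x}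
          = {(x, v). x \<in> U \<and> v \<in> V \<and> v \<in> lsd n \<phi> x}" using assms by (simp add: VC_def)
  have "(x, v) \<in> {(x, v). x \<in> U \<and> h x < h xb + ereal \<epsilon> \<and> v \<in> V \<and> v \<in> lsd n h x}
      \<longleftrightarrow> (x, v) \<in> {(x, v). x \<in> U \<and> v \<in> V \<and> v \<in> lsd n \<phi> x}" by (simp only: eq)
  then show ?thesis by simp
qed

lemma VC_common: "VC n h xb vb U V \<phi> \<epsilon> \<Longrightarrow> x \<in> U \<Longrightarrow> v \<in> V \<Longrightarrow> v \<in> lsd n \<phi> x \<Longrightarrow> h x = \<phi> x"
  unfolding VC_def by blast

lemma nhd_center: "nhd_n n U x \<Longrightarrow> x \<in> U"
  unfolding nhd_n_def by force

lemma nhd_inter_ball: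
  assumes "nhd_n n U x" "r > 0"
  shows "nhd_n n (U \<inter> {y\<in>Rn n. vdist n y x < r}) x"
proof -
  obtain r0 where r0: "r0 > 0" "{y\<in>Rn n. vdist n y x < r0} \<subseteq> U" using assms(1) unfolding nhd_n_def by blast
  have "{y\<in>Rn n. vdist n y x < min r0 r} \<subseteq> U \<inter> {y\<in>Rn n. vdist n y x < r}" using r0 by auto
  then show ?thesis using assms r0 unfolding nhd_n_def by (intro conjI exI[of _ "min r0 r"]) auto
qed

lemma VC_shrink:
  assumes vc: "VC n h xb vb U0 V0 \<phi> \<epsilon>" and vb: "vb \<in> lsd n h xb" and lsc: "lsc_n n h" and eta: "\<eta> > 0"
  shows "\<exists>U V. VC n h xb vb U V \<phi> \<epsilon> \<and> (\<forall>x\<in>U. ereal (real_of_ereal (h xb) - \<eta>) < h x) \<and>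
     (\<forall>x v. x \<in> U \<and> v \<in> V \<and> v \<in> lsd n \<phi> x \<longrightarrow> h x < ereal (real_of_ereal (h xb) + \<eta>))"
proof -
  have xbR: "xb \<in> Rn n" and vbR: "vb \<in> Rn n" and fin: "\<bar>h xb\<bar> \<noteq> \<infinity>" using vb by (auto simp: lsd_def)
  define hb where "hb = real_of_ereal (h xb)"
  have hb: "h xb = ereal hb" using fin by (simp add: hb_def ereal_real')
  have conv: "convex_fn_n n \<phi>" and nmp: "no_minf n \<phi>" and nhU: "nhd_n n U0 xb" and nhV: "nhd_n n V0 vb"
    and cU: "convex_set_n n U0" and cV: "convex_set_n n V0" and e: "\<epsilon> > 0"
    using vc by (auto simp: VC_def)
  have "xb \<in> U0" using nhU by (rule nhd_center)
  moreover have "vb \<in> V0" using nhV by (rule nhd_center)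
  moreover have "h xb < h xb + ereal \<epsilon>" using hb e by simp
  ultimately have "vb \<in> lsd n \<phi> xb" using VC_iff[OF vc, of xb vb] vb by simp
  then have pxb: "\<phi> xb = h xb" using VC_common[OF vc \<open>xb \<in> U0\<close> \<open>vb \<in> V0\<close>] by simp
  have "ereal (hb - \<eta>) < h xb" using hb eta by simp
  then obtain d1 where d1: "d1 > 0" "\<forall>y\<in>Rn n. vdist n y xb < d1 \<longrightarrow> ereal (hb - \<eta>) < h y"
    using lsc xbR unfolding lsc_n_def by blast
  define nv where "nv = L2_set vb {..<n}"
  have nv: "nv \<ge> 0" by (simp add: nv_def)
  define r where "r = min d1 (\<eta> / (2 * (nv + 1)))"
  have r: "r > 0" using d1 eta nv by (simp add: r_def)
  define U where "U = U0 \<inter> {y\<in>Rn n. vdist n y xb < r}"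
  define V where "V = V0 \<inter> {y\<in>Rn n. vdist n y vb < 1}"
  have UU: "U \<subseteq> U0" and VV: "V \<subseteq> V0" by (auto simp: U_def V_def)
  have VCn: "VC n h xb vb U V \<phi> \<epsilon>"
  proof -
    have "convex_set_n n U" unfolding U_def by (intro convex_inter cU ball_convex)
    moreover have "convex_set_n n V" unfolding V_def by (intro convex_inter cV ball_convex)
    moreover have "nhd_n n U xb" unfolding U_def using nhU r by (rule nhd_inter_ball)
    moreover have "nhd_n n V vb" unfolding V_def using nhV by (rule nhd_inter_ball) simp
    moreover have "\<forall>x\<in>U. \<phi> x \<le> h x" using vc UU by (auto simp: VC_def)
    moreover have "{(x, v). x \<in> U \<and> h x < h xb + ereal \<epsilon> \<and> v \<in> V \<and> v \<in> lsd n h x}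
          = {(x, v). x \<in> U \<and> v \<in> V \<and> v \<in> lsd n \<phi> x}"
    proof (intro set_eqI iffI; clarsimp)
      fix x v assume "x \<in> U" "h x < h xb + ereal \<epsilon>" "v \<in> V" "v \<in> lsd n h x"
      then show "v \<in> lsd n \<phi> x" using VC_iff[OF vc, of x v] UU VV by auto
    next
      fix x v assume "x \<in> U" "v \<in> V" "v \<in> lsd n \<phi> x"
      then show "h x < h xb + ereal \<epsilon> \<and> v \<in> lsd n h x" using VC_iff[OF vc, of x v] UU VV by auto
    qed
    moreover have "\<forall>x v. x \<in> U \<and> v \<in> V \<and> v \<in> lsd n \<phi> x \<longrightarrow> h x = \<phi> x"
      using VC_common[OF vc] UU VV by auto
    ultimately show ?thesis using vc unfolding VC_def by auto
  qed
  have low: "\<forall>x\<in>U. ereal (hb - \<eta>) < h x"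
    using d1 by (auto simp: U_def r_def)
  have up: "h x < ereal (hb + \<eta>)" if x: "x \<in> U" and v: "v \<in> V" and lx: "v \<in> lsd n \<phi> x" for x v
  proof -
    have hx: "h x = \<phi> x" using VC_common[OF vc] UU VV x v lx by auto
    have fx: "\<bar>\<phi> x\<bar> \<noteq> \<infinity>" using lx by (simp add: lsd_def)
    have sg: "\<phi> xb \<ge> \<phi> x + ereal (ip n v (vdiff xb x))"
      by (rule lsd_convex_global[OF conv nmp lx xbR])
    define I where "I = ip n v (vdiff xb x)"
    have "real_of_ereal (\<phi> x) + I \<le> hb" using sg fx pxb hb unfolding I_def by (cases "\<phi> x") auto
    moreover have "\<bar>I\<bar> \<le> \<eta> / 2"
    proof -
      have "\<bar>I\<bar> \<le> L2_set v {..<n} * L2_set (vdiff xb x) {..<n}" unfolding I_def by (rule ip_bound)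
      also have "L2_set (vdiff xb x) {..<n} = vdist n x xb" by (simp add: vdist_L2[symmetric] vdist_sym)
      also have "L2_set v {..<n} * vdist n x xb \<le> (nv + 1) * (\<eta> / (2 * (nv + 1)))"
      proof (intro mult_mono)
        show "L2_set v {..<n} \<le> nv + 1" using norm_le_vdist[of v n vb] v by (simp add: V_def nv_def)
        show "vdist n x xb \<le> \<eta> / (2 * (nv + 1))" using x by (simp add: U_def r_def)
      qed (use nv in auto)
      also have "\<dots> = \<eta> / 2" using nv by (simp add: field_simps)
      finally show ?thesis .
    qed
    ultimately have "real_of_ereal (\<phi> x) < hb + \<eta>" using eta by linarith
    then show ?thesis using hx fx by (cases "\<phi> x") auto
  qed
  show ?thesis unfolding hb_def[symmetric] using VCn low up by blast
qed


lemma prod_convex: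
  assumes "\<And>i. i < m \<Longrightarrow> convex_set_n (n i) (U i)"
  shows "convex_set_n (offs n m) {x\<in>Rn (offs n m). \<forall>i<m. blk n x i \<in> U i}"
  unfolding convex_set_n_def
proof (intro conjI ballI)
  fix x y t assume x: "x \<in> {x\<in>Rn (offs n m). \<forall>i<m. blk n x i \<in> U i}" and y: "y \<in> {x\<in>Rn (offs n m). \<forall>i<m. blk n x i \<in> U i}"
    and t: "t \<in> {0..1::real}"
  have "blk n (vcomb t x y) i \<in> U i" if i: "i < m" for i
    using assms[OF i] x y t i unfolding convex_set_n_def blk_vcomb by auto
  then show "vcomb t x y \<in> {x\<in>Rn (offs n m). \<forall>i<m. blk n x i \<in> U i}"
    using x y by (auto intro: vcomb_Rn)
qed auto

lemma prod_nhd: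
  assumes "\<And>i. i < m \<Longrightarrow> nhd_n (n i) (U i) (c i)"
  shows "nhd_n (offs n m) {x\<in>Rn (offs n m). \<forall>i<m. blk n x i \<in> U i} (concat_blocks n m c)"
proof -
  have cR: "c i \<in> Rn (n i)" if "i < m" for i using assms[OF that] by (simp add: nhd_n_def)
  have bc: "blk n (concat_blocks n m c) i = c i" if "i < m" for i using that cR[OF that] by (rule concat_blk)
  have "\<forall>i. \<exists>r. i < m \<longrightarrow> r > 0 \<and> {y\<in>Rn (n i). vdist (n i) y (c i) < r} \<subseteq> U i"
    using assms unfolding nhd_n_def by blast
  then obtain r where r: "\<And>i. i < m \<Longrightarrow> r i > 0 \<and> {y\<in>Rn (n i). vdist (n i) y (c i) < r i} \<subseteq> U i"
    by (rule choice[THEN exE]) blast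
  obtain d where d: "d > 0" "\<And>i. i < m \<Longrightarrow> d \<le> r i" using pos_min[of m r] r by blast
  have "{y\<in>Rn (offs n m). vdist (offs n m) y (concat_blocks n m c) < d} \<subseteq> {x\<in>Rn (offs n m). \<forall>i<m. blk n x i \<in> U i}"
  proof (intro subsetI CollectI conjI allI impI)
    fix y assume y: "y \<in> {y\<in>Rn (offs n m). vdist (offs n m) y (concat_blocks n m c) < d}"
    then show "y \<in> Rn (offs n m)" by simp
    fix i assume i: "i < m"
    have "vdist (n i) (blk n y i) (c i) \<le> vdist (offs n m) y (concat_blocks n m c)"
      using vdist_blk_le[OF i, of n y "concat_blocks n m c"] bc[OF i] by simp
    then have "vdist (n i) (blk n y i) (c i) < r i" using y d(2)[OF i] by simp
    then show "blk n y i \<in> U i" using r[OF i] by auto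
  qed
  moreover have "{x\<in>Rn (offs n m). \<forall>i<m. blk n x i \<in> U i} \<subseteq> Rn (offs n m)" by auto
  ultimately show ?thesis unfolding nhd_n_def using d(1) by auto
qed

lemma sum_bound_fwd:
  fixes a b :: "nat \<Rightarrow> real"
  assumes lo: "\<And>j. j < m \<Longrightarrow> b j - \<eta> < a j" and S: "(\<Sum>j<m. a j) < (\<Sum>j<m. b j) + (real m + 1) * \<eta>"
    and i: "i < m" and eta: "\<eta> > 0"
  shows "a i < b i + (2 * real m + 1) * \<eta>"
proof -
  have r: "(\<Sum>j<m. a j - b j) = (a i - b i) + (\<Sum>j\<in>{..<m} - {i}. a j - b j)"
    using i by (intro sum.remove) auto
  have h1: "(\<Sum>j\<in>{..<m} - {i}. - \<eta>) \<le> (\<Sum>j\<in>{..<m} - {i}. a j - b j)"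
    using lo by (intro sum_mono) (auto simp: algebra_simps less_imp_le)
  have h2: "(\<Sum>j\<in>{..<m} - {i}. - \<eta>) = - real (card ({..<m} - {i})) * \<eta>" by simp
  have "real (card ({..<m} - {i})) * \<eta> \<le> real m * \<eta>"
    using eta card_Diff1_le[of "{..<m}" i] by (intro mult_right_mono) auto
  then have "(\<Sum>j\<in>{..<m} - {i}. a j - b j) \<ge> - (real m * \<eta>)" using h1 h2 by linarith
  moreover have "(\<Sum>j<m. a j - b j) = (\<Sum>j<m. a j) - (\<Sum>j<m. b j)" by (simp add: sum_subtractf)
  ultimately show ?thesis using r S by (simp add: algebra_simps)
qed

lemma sum_bound_bwd:
  fixes a b :: "nat \<Rightarrow> real"
  assumes up: "\<And>j. j < m \<Longrightarrow> a j < b j + \<eta>" and eta: "\<eta> > 0"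
  shows "(\<Sum>j<m. a j) < (\<Sum>j<m. b j) + (real m + 1) * \<eta>"
proof -
  have "(\<Sum>j<m. a j) \<le> (\<Sum>j<m. b j + \<eta>)" using up by (intro sum_mono) (auto simp: less_imp_le)
  also have "\<dots> = (\<Sum>j<m. b j) + real m * \<eta>" by (simp add: sum.distrib)
  finally show ?thesis using eta by (simp add: algebra_simps)
qed


theorem mainTheorem18:
  fixes m :: nat and n :: "nat \<Rightarrow> nat"
    and f :: "nat \<Rightarrow> (nat \<Rightarrow> real) \<Rightarrow> ereal"
    and xb vb :: "nat \<Rightarrow> nat \<Rightarrow> real"
  assumes "\<And>i. i < m \<Longrightarrow> no_minf (n i) (f i)"
    and "\<And>i. i < m \<Longrightarrow> lsc_n (n i) (f i)"
    and "\<And>i. i < m \<Longrightarrow> var_convex (n i) (f i) (xb i) (vb i)"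
  shows "no_minf (\<Sum>i<m. n i) (sep_sum n m f)
    \<and> lsc_n (\<Sum>i<m. n i) (sep_sum n m f)
    \<and> var_convex (\<Sum>i<m. n i) (sep_sum n m f) (concat_blocks n m xb) (concat_blocks n m vb)"
proof -
  note nm = assms(1) and lscf = assms(2) and vcf = assms(3)
  have N: "(\<Sum>i<m. n i) = offs n m" by (simp add: offs_def)
  have sepE: "sep_sum n m g = (\<lambda>x. \<Sum>i<m. g i (blk n x i))" for g by (rule ext) (simp add: sep_sum_def)
  have lscF: "lsc_n (offs n m) (sep_sum n m f) \<and> no_minf (offs n m) (sep_sum n m f)"
    unfolding sepE using nm lscf by (intro lsc_sum lsc_blk no_minf_blk) auto
  have "\<forall>i. \<exists>p. i < m \<longrightarrow> VC (n i) (f i) (xb i) (vb i) (fst p) (fst (snd p)) (fst (snd (snd p))) (snd (snd (snd p)))"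
  proof (intro allI)
    fix i show "\<exists>p. i < m \<longrightarrow> VC (n i) (f i) (xb i) (vb i) (fst p) (fst (snd p)) (fst (snd (snd p))) (snd (snd (snd p)))"
    proof (cases "i < m")
      case True
      then obtain U V \<phi> \<epsilon> where "VC (n i) (f i) (xb i) (vb i) U V \<phi> \<epsilon>" using vcf[OF True] unfolding var_convex_VC by blast
      then show ?thesis by (intro exI[of _ "(U, V, \<phi>, \<epsilon>)"]) simp
    qed simp
  qed
  then obtain p where p: "\<And>i. i < m \<Longrightarrow> VC (n i) (f i) (xb i) (vb i) (fst (p i)) (fst (snd (p i))) (fst (snd (snd (p i)))) (snd (snd (snd (p i))))"
    by (rule choice[THEN exE]) blast
  define \<phi> where "\<phi> i = fst (snd (snd (p i)))" for i
  define \<epsilon> where "\<epsilon> i = snd (snd (snd (p i)))" for i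
  have vb: "vb i \<in> lsd (n i) (f i) (xb i)" if "i < m" for i using vcf[OF that] unfolding var_convex_VC by simp
  have e_pos: "\<epsilon> i > 0" if "i < m" for i using p[OF that] by (simp add: VC_def \<epsilon>_def)
  obtain e where e: "e > 0" "\<And>i. i < m \<Longrightarrow> e \<le> \<epsilon> i" using pos_min[of m \<epsilon>] e_pos by blast
  define \<eta> where "\<eta> = e / (2 * real m + 1)"
  have eta: "\<eta> > 0" using e by (simp add: \<eta>_def)
  have eta2: "(2 * real m + 1) * \<eta> = e" by (simp add: \<eta>_def)
  have "\<forall>i. \<exists>q. i < m \<longrightarrow> VC (n i) (f i) (xb i) (vb i) (fst q) (snd q) (\<phi> i) (\<epsilon> i) \<and>
      (\<forall>x\<in>fst q. ereal (real_of_ereal (f i (xb i)) - \<eta>) < f i x) \<and>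
      (\<forall>x v. x \<in> fst q \<and> v \<in> snd q \<and> v \<in> lsd (n i) (\<phi> i) x \<longrightarrow> f i x < ereal (real_of_ereal (f i (xb i)) + \<eta>))"
  proof (intro allI)
    fix i show "\<exists>q. i < m \<longrightarrow> VC (n i) (f i) (xb i) (vb i) (fst q) (snd q) (\<phi> i) (\<epsilon> i) \<and>
      (\<forall>x\<in>fst q. ereal (real_of_ereal (f i (xb i)) - \<eta>) < f i x) \<and>
      (\<forall>x v. x \<in> fst q \<and> v \<in> snd q \<and> v \<in> lsd (n i) (\<phi> i) x \<longrightarrow> f i x < ereal (real_of_ereal (f i (xb i)) + \<eta>))"
    proof (cases "i < m")
      case True
      obtain U V where "VC (n i) (f i) (xb i) (vb i) U V (\<phi> i) (\<epsilon> i) \<and>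
        (\<forall>x\<in>U. ereal (real_of_ereal (f i (xb i)) - \<eta>) < f i x) \<and>
        (\<forall>x v. x \<in> U \<and> v \<in> V \<and> v \<in> lsd (n i) (\<phi> i) x \<longrightarrow> f i x < ereal (real_of_ereal (f i (xb i)) + \<eta>))"
        using VC_shrink[OF p[OF True] vb[OF True] lscf[OF True] eta] unfolding \<phi>_def \<epsilon>_def by blast
      then show ?thesis by (intro exI[of _ "(U, V)"]) simp
    qed simp
  qed
  then obtain q where q: "\<And>i. i < m \<Longrightarrow> VC (n i) (f i) (xb i) (vb i) (fst (q i)) (snd (q i)) (\<phi> i) (\<epsilon> i) \<and>
      (\<forall>x\<in>fst (q i). ereal (real_of_ereal (f i (xb i)) - \<eta>) < f i x) \<and>
      (\<forall>x v. x \<in> fst (q i) \<and> v \<in> snd (q i) \<and> v \<in> lsd (n i) (\<phi> i) x \<longrightarrow> f i x < ereal (real_of_ereal (f i (xb i)) + \<eta>))"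
    by (rule choice[THEN exE]) blast
  define U where "U i = fst (q i)" for i
  define V where "V i = snd (q i)" for i
  have VCi: "VC (n i) (f i) (xb i) (vb i) (U i) (V i) (\<phi> i) (\<epsilon> i)" if "i < m" for i
    using q[OF that] by (simp add: U_def V_def)
  have lowi: "ereal (real_of_ereal (f i (xb i)) - \<eta>) < f i x" if "i < m" "x \<in> U i" for i x
    using q[OF that(1)] that(2) by (simp add: U_def)
  have upi: "f i x < ereal (real_of_ereal (f i (xb i)) + \<eta>)" if "i < m" "x \<in> U i" "v \<in> V i" "v \<in> lsd (n i) (\<phi> i) x" for i x v
  proof -
    have H: "\<forall>x v. x \<in> fst (q i) \<and> v \<in> snd (q i) \<and> v \<in> lsd (n i) (\<phi> i) x \<longrightarrow> f i x < ereal (real_of_ereal (f i (xb i)) + \<eta>)"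
      using q[OF that(1)] by blast
    show ?thesis using H[rule_format, of x v] that(2-4) unfolding U_def V_def by simp
  qed
  have lscp: "lsc_n (n i) (\<phi> i)" and nmp: "no_minf (n i) (\<phi> i)" and convp: "convex_fn_n (n i) (\<phi> i)"
    and cU: "convex_set_n (n i) (U i)" and cV: "convex_set_n (n i) (V i)"
    and nU: "nhd_n (n i) (U i) (xb i)" and nV: "nhd_n (n i) (V i) (vb i)"
    and ple: "\<forall>x\<in>U i. \<phi> i x \<le> f i x" if "i < m" for i
    using VCi[OF that] by (auto simp: VC_def)
  define xbc where "xbc = concat_blocks n m xb"
  define vbc where "vbc = concat_blocks n m vb"
  have xbR: "xb i \<in> Rn (n i)" and vbR: "vb i \<in> Rn (n i)" and fxb: "\<bar>f i (xb i)\<bar> \<noteq> \<infinity>" if "i < m" for i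
    using vb[OF that] by (auto simp: lsd_def)
  have bxb: "blk n xbc i = xb i" and bvb: "blk n vbc i = vb i" if "i < m" for i
    unfolding xbc_def vbc_def using that xbR[OF that] vbR[OF that] by (auto intro: concat_blk)
  define hb where "hb i = real_of_ereal (f i (xb i))" for i
  have Fxb: "sep_sum n m f xbc = ereal (\<Sum>i<m. hb i)"
  proof -
    have "\<forall>i<m. \<bar>f i (blk n xbc i)\<bar> \<noteq> \<infinity>" using fxb bxb by simp
    then have "sep_sum n m f xbc = ereal (\<Sum>i<m. real_of_ereal (f i (blk n xbc i)))" by (rule sep_real)
    then show ?thesis using bxb by (simp add: hb_def)
  qed
  define UU where "UU = {x\<in>Rn (offs n m). \<forall>i<m. blk n x i \<in> U i}"
  define VV where "VV = {x\<in>Rn (offs n m). \<forall>i<m. blk n x i \<in> V i}"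
  define \<Phi> where "\<Phi> = sep_sum n m \<phi>"
  define \<epsilon>' where "\<epsilon>' = (real m + 1) * \<eta>"
  have lscPhi: "lsc_n (offs n m) \<Phi> \<and> no_minf (offs n m) \<Phi>"
    unfolding \<Phi>_def sepE using nmp lscp by (intro lsc_sum lsc_blk no_minf_blk) auto
  have convPhi: "convex_fn_n (offs n m) \<Phi>"
    unfolding \<Phi>_def sepE using nmp convp by (intro convex_sum convex_blk no_minf_blk) auto
  have PhiF: "\<forall>x\<in>UU. \<Phi> x \<le> sep_sum n m f x"
    unfolding \<Phi>_def sepE UU_def using ple by (auto intro!: sum_mono)
  have fwd: "v \<in> lsd (offs n m) \<Phi> x"
    if x: "x \<in> UU" and v: "v \<in> VV" and lt: "sep_sum n m f x < sep_sum n m f xbc + ereal \<epsilon>'"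
      and lx: "v \<in> lsd (offs n m) (sep_sum n m f) x" for x v
  proof -
    have xR: "x \<in> Rn (offs n m)" using x by (simp add: UU_def)
    have blf: "v \<in> Rn (offs n m) \<and> (\<forall>i<m. blk n v i \<in> lsd (n i) (f i) (blk n x i))"
      using lx lsd_sep[OF nm lscf xR] by blast
    have finF: "\<bar>sep_sum n m f x\<bar> \<noteq> \<infinity>" using lx by (simp add: lsd_def)
    have fin: "\<forall>i<m. \<bar>f i (blk n x i)\<bar> \<noteq> \<infinity>" using finF fin_blocks[OF nm, of m] by simp
    define a where "a i = real_of_ereal (f i (blk n x i))" for i
    have Fx: "sep_sum n m f x = ereal (\<Sum>i<m. a i)" unfolding a_def by (rule sep_real) (rule fin)
    have S: "(\<Sum>i<m. a i) < (\<Sum>i<m. hb i) + (real m + 1) * \<eta>" using lt Fx Fxb by (simp add: \<epsilon>'_def)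
    have lo: "hb j - \<eta> < a j" if j: "j < m" for j
    proof -
      have "ereal (hb j - \<eta>) < f j (blk n x j)" using lowi[OF j] x j by (simp add: UU_def hb_def)
      then show ?thesis using fin[rule_format, OF j] unfolding a_def by (cases "f j (blk n x j)") auto
    qed
    have "blk n v i \<in> lsd (n i) (\<phi> i) (blk n x i)" if i: "i < m" for i
    proof -
      have "a i < hb i + (2 * real m + 1) * \<eta>" by (rule sum_bound_fwd[OF lo S i eta])
      then have "a i < hb i + \<epsilon> i" using eta2 e(2)[OF i] by simp
      then have "f i (blk n x i) < f i (xb i) + ereal (\<epsilon> i)"
        using fin[rule_format, OF i] fxb[OF i] unfolding a_def hb_def
        by (cases "f i (blk n x i)"; cases "f i (xb i)") auto
      moreover have "blk n x i \<in> U i" "blk n v i \<in> V i" using x v i by (auto simp: UU_def VV_def)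
      ultimately show ?thesis using VC_iff[OF VCi[OF i], of "blk n x i" "blk n v i"] blf i by auto
    qed
    then show ?thesis unfolding \<Phi>_def using lsd_sep[OF nmp lscp xR] blf by blast
  qed
  have bwd: "sep_sum n m f x < sep_sum n m f xbc + ereal \<epsilon>' \<and> v \<in> lsd (offs n m) (sep_sum n m f) x \<and> sep_sum n m f x = \<Phi> x"
    if x: "x \<in> UU" and v: "v \<in> VV" and lx: "v \<in> lsd (offs n m) \<Phi> x" for x v
  proof -
    have xR: "x \<in> Rn (offs n m)" using x by (simp add: UU_def)
    have blp: "v \<in> Rn (offs n m) \<and> (\<forall>i<m. blk n v i \<in> lsd (n i) (\<phi> i) (blk n x i))"
      using lx lsd_sep[OF nmp lscp xR] unfolding \<Phi>_def by blast
    have xi: "blk n x i \<in> U i" and vi: "blk n v i \<in> V i" if "i < m" for i using x v that by (auto simp: UU_def VV_def)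
    have li: "blk n v i \<in> lsd (n i) (f i) (blk n x i)" and eqi: "f i (blk n x i) = \<phi> i (blk n x i)"
      and ui: "f i (blk n x i) < ereal (hb i + \<eta>)" if i: "i < m" for i
    proof -
      have lp: "blk n v i \<in> lsd (n i) (\<phi> i) (blk n x i)" using blp i by simp
      show "blk n v i \<in> lsd (n i) (f i) (blk n x i)" using VC_iff[OF VCi[OF i], of "blk n x i" "blk n v i"] lp xi[OF i] vi[OF i] by simp
      show "f i (blk n x i) = \<phi> i (blk n x i)" by (rule VC_common[OF VCi[OF i] xi[OF i] vi[OF i] lp])
      show "f i (blk n x i) < ereal (hb i + \<eta>)" using upi[OF i xi[OF i] vi[OF i] lp] by (simp add: hb_def)
    qed
    have lF: "v \<in> lsd (offs n m) (sep_sum n m f) x" using lsd_sep[OF nm lscf xR] blp li by blast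
    have fin: "\<forall>i<m. \<bar>f i (blk n x i)\<bar> \<noteq> \<infinity>" using li by (simp add: lsd_def)
    define a where "a i = real_of_ereal (f i (blk n x i))" for i
    have Fx: "sep_sum n m f x = ereal (\<Sum>i<m. a i)" unfolding a_def by (rule sep_real) (rule fin)
    have "a i < hb i + \<eta>" if i: "i < m" for i
      using ui[OF i] fin[rule_format, OF i] unfolding a_def by (cases "f i (blk n x i)") auto
    then have "(\<Sum>i<m. a i) < (\<Sum>i<m. hb i) + (real m + 1) * \<eta>" by (rule sum_bound_bwd[OF _ eta])
    then have lt: "sep_sum n m f x < sep_sum n m f xbc + ereal \<epsilon>'" using Fx Fxb by (simp add: \<epsilon>'_def)
    have "sep_sum n m f x = \<Phi> x" unfolding \<Phi>_def sep_sum_def using eqi by (intro sum.cong) auto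
    then show ?thesis using lt lF by simp
  qed
  have VCg: "VC (offs n m) (sep_sum n m f) xbc vbc UU VV \<Phi> \<epsilon>'"
    unfolding VC_def
  proof (intro conjI)
    show "convex_set_n (offs n m) UU" unfolding UU_def using cU by (rule prod_convex)
    show "convex_set_n (offs n m) VV" unfolding VV_def using cV by (rule prod_convex)
    show "nhd_n (offs n m) UU xbc" unfolding UU_def xbc_def using nU by (rule prod_nhd)
    show "nhd_n (offs n m) VV vbc" unfolding VV_def vbc_def using nV by (rule prod_nhd)
    show "lsc_n (offs n m) \<Phi>" "no_minf (offs n m) \<Phi>" using lscPhi by auto
    show "convex_fn_n (offs n m) \<Phi>" by (rule convPhi)
    show "\<forall>x\<in>UU. \<Phi> x \<le> sep_sum n m f x" by (rule PhiF)
    show "\<epsilon>' > 0" using eta by (simp add: \<epsilon>'_def)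
    show "{(x, v). x \<in> UU \<and> sep_sum n m f x < sep_sum n m f xbc + ereal \<epsilon>' \<and> v \<in> VV \<and> v \<in> lsd (offs n m) (sep_sum n m f) x}
        = {(x, v). x \<in> UU \<and> v \<in> VV \<and> v \<in> lsd (offs n m) \<Phi> x}"
      using fwd bwd by auto
    show "\<forall>x v. x \<in> UU \<and> v \<in> VV \<and> v \<in> lsd (offs n m) \<Phi> x \<longrightarrow> sep_sum n m f x = \<Phi> x"
      using bwd by auto
  qed
  have vbl: "vbc \<in> lsd (offs n m) (sep_sum n m f) xbc"
  proof -
    have xR: "xbc \<in> Rn (offs n m)" by (simp add: xbc_def)
    have "vbc \<in> Rn (offs n m) \<and> (\<forall>i<m. blk n vbc i \<in> lsd (n i) (f i) (blk n xbc i))"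
      using vb bxb bvb by (simp add: vbc_def)
    then show ?thesis using lsd_sep[OF nm lscf xR] by blast
  qed
  have "var_convex (offs n m) (sep_sum n m f) xbc vbc"
    unfolding var_convex_VC using vbl VCg by blast
  then show ?thesis unfolding N xbc_def vbc_def using lscF by simp
qed

end
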